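(* Let $m_1\ge1$, $\mathcal X=[-1,1]^{m_1}$, $\mathcal Y\subseteq\mathbb{R}$, $\mathcal Z=\mathcal X\times\mathcal Y$, and let $\mathcal D$ be a probability distribution on $\mathcal Z$. Let $d:\mathcal Y\times\mathbb{R}\to[0,1]$ satisfy $|d(y,u)-d(y,u')|\le|u-u'|$ for all $y,u,u'$. Fix $q\in[1,\infty]$, $c,c_o>0$, an integer $k\ge0$, integers $d_1,\dots,d_k\ge1$, $\mathbf d=(m_1,d_1,\dots,d_k,1)$, $\delta\in(0,1)$, and assume $c^k\le a_0$ for some $a_0\ge1$. For $f\in\mathcal{N}^{k,\mathbf d}_{1,q,c,c_o}$ let $h_f(x,y)=d(y,f(x))$. Let $S=\{z_1,\dots,z_n\}$ be $n$ i.i.d. samples from $\mathcal D$. Then with probability at least $1-\delta$ over $S$, for all $f\in\mathcal{N}^{k,\mathbf d}_{1,q,c,c_o}$, $$\mathbb{E}_{z\sim\mathcal D}[h_f(z)]\le\frac1n\sum_{i=1}^nh_f(z_i)+\sqrt{\frac{\log(1/\delta)}{2n}}+\frac{4c_oa_0}{\sqrt n}\sqrt{k+2+\log(m_1+1)}.$$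
   Context: $\sigma(u)=\max(u,0)$, applied coordinatewise. For a real $s_1\times s_2$ matrix $A=(a_{ij})$: $\|A\|_{p,q}=\big(\sum_{j=1}^{s_2}(\sum_{i=1}^{s_1}|a_{ij}|^p)^{q/p}\big)^{1/q}$ for $q<\infty$, $\|A\|_{p,\infty}=\max_j(\sum_{i}|a_{ij}|^p)^{1/p}$. An affine map $T:\mathbb{R}^{a}\to\mathbb{R}^{b}$, $T(u)=W^Tu+B$, is identified with $\tilde V\in\mathbb{R}^{(a+1)\times b}$ whose first row is $B^T$ and remaining rows form $W$; $\|T\|_{p,q}:=\|\tilde V\|_{p,q}$. For $k\ge0$, width vector $\mathbf d=(d_0,\dots,d_{k+1})$ and $c,c_o>0$, $\mathcal{N}^{k,\mathbf d}_{p,q,c,c_o}$ is the set of all $f=T_{k+1}\circ\sigma\circ T_k\circ\cdots\circ\sigma\circ T_1:\mathbb{R}^{d_0}\to\mathbb{R}^{d_{k+1}}$ with affine $T_i:\mathbb{R}^{d_{i-1}}\to\mathbb{R}^{d_i}$, $\|T_i\|_{p,q}=c$ for $i\le k$ and $\|T_{k+1}\|_{p,q}\le c_o$. *)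

theory Defs
  imports "HOL-Analysis.Analysis" "HOL-Probability.Probability"
begin

text \<open>Vectors of R^a are represented as functions nat => real (only coordinates < a matter).
An affine map T : R^a -> R^b is represented by its (a+1) x b matrix V (V 0 j = B_j,
V (i+1) j = W_ij), given as a function nat => nat => real.\<close>

type_synonym layer = "nat \<Rightarrow> nat \<Rightarrow> real"

definition affine_apply :: "layer \<Rightarrow> nat \<Rightarrow> (nat \<Rightarrow> real) \<Rightarrow> (nat \<Rightarrow> real)" where
  "affine_apply V a u = (\<lambda>j. V 0 j + (\<Sum>i<a. V (Suc i) j * u i))"

definition relu :: "(nat \<Rightarrow> real) \<Rightarrow> (nat \<Rightarrow> real)" where
  "relu u = (\<lambda>j. max (u j) 0)"

definition pq_norm :: "real \<Rightarrow> ereal \<Rightarrow> nat \<Rightarrow> nat \<Rightarrow> layer \<Rightarrow> real" where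
  "pq_norm p q a b V =
     (let col = (\<lambda>j. (\<Sum>i\<le>a. \<bar>V i j\<bar> powr p) powr (1 / p)) in
      if q = \<infinity> then Max (col ` {..<b})
      else (\<Sum>j<b. col j powr real_of_ereal q) powr (1 / real_of_ereal q))"

fun hidden :: "nat list \<Rightarrow> layer list \<Rightarrow> (nat \<Rightarrow> real) \<Rightarrow> (nat \<Rightarrow> real)" where
  "hidden (a # ds) (V # Vs) x = hidden ds Vs (relu (affine_apply V a x))"
| "hidden _ _ x = x"

definition relu_nets ::
  "nat \<Rightarrow> nat list \<Rightarrow> real \<Rightarrow> ereal \<Rightarrow> real \<Rightarrow> real \<Rightarrow> ((nat \<Rightarrow> real) \<Rightarrow> (nat \<Rightarrow> real)) set" where
  "relu_nets k ds p q c co =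
     {F. \<exists>Vs. length Vs = k + 1 \<and> length ds = k + 2 \<and>
          (\<forall>i<k. pq_norm p q (ds ! i) (ds ! Suc i) (Vs ! i) = c) \<and>
          pq_norm p q (ds ! k) (ds ! Suc k) (Vs ! k) \<le> co \<and>
          F = (\<lambda>x. affine_apply (Vs ! k) (ds ! k) (hidden ds (take k Vs) x))}"

definition cube :: "nat \<Rightarrow> (nat \<Rightarrow> real) set" where
  "cube m = {x. (\<forall>i<m. \<bar>x i\<bar> \<le> 1) \<and> (\<forall>i\<ge>m. x i = 0)}"

end

theory Submission
  imports Defs "HOL-Probability.Probability"
begin


fun ravg :: "nat \<Rightarrow> ((nat \<Rightarrow> real) \<Rightarrow> real) \<Rightarrow> real" where
  "ravg 0 \<Phi> = \<Phi> (\<lambda>_. 0)"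
| "ravg (Suc n) \<Phi> = (ravg n (\<lambda>e. \<Phi> (e(n:=1))) + ravg n (\<lambda>e. \<Phi> (e(n:=-1)))) / 2"

definition valid :: "nat \<Rightarrow> (nat \<Rightarrow> real) \<Rightarrow> bool" where
  "valid n e \<longleftrightarrow> (\<forall>i<n. e i = 1 \<or> e i = -1)"

lemma valid_upd: "valid n e \<Longrightarrow> s = 1 \<or> s = -1 \<Longrightarrow> valid (Suc n) (e(n:=s))"
  unfolding valid_def by (auto simp: less_Suc_eq)

lemma valid_abs: "valid n e \<Longrightarrow> i < n \<Longrightarrow> \<bar>e i\<bar> = 1"
  unfolding valid_def by auto

lemma ravg_mono:
  "(\<And>e. valid n e \<Longrightarrow> \<Phi> e \<le> \<Psi> e) \<Longrightarrow> ravg n \<Phi> \<le> ravg n \<Psi>"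
proof (induction n arbitrary: \<Phi> \<Psi>)
  case 0 then show ?case by (simp add: valid_def)
next
  case (Suc n)
  have "ravg n (\<lambda>e. \<Phi> (e(n:=1))) \<le> ravg n (\<lambda>e. \<Psi> (e(n:=1)))"
    by (rule Suc.IH) (intro Suc.prems valid_upd, auto)
  moreover have "ravg n (\<lambda>e. \<Phi> (e(n:=-1))) \<le> ravg n (\<lambda>e. \<Psi> (e(n:=-1)))"
    by (rule Suc.IH) (intro Suc.prems valid_upd, auto)
  ultimately show ?case by simp
qed

lemma ravg_cong:
  "(\<And>e. valid n e \<Longrightarrow> \<Phi> e = \<Psi> e) \<Longrightarrow> ravg n \<Phi> = ravg n \<Psi>"
  by (rule antisym; rule ravg_mono; simp)

lemma ravg_const[simp]: "ravg n (\<lambda>_. c) = c"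
  by (induction n) auto

lemma ravg_add: "ravg n (\<lambda>e. \<Phi> e + \<Psi> e) = ravg n \<Phi> + ravg n \<Psi>"
  by (induction n arbitrary: \<Phi> \<Psi>) (auto simp: field_simps)

lemma ravg_cmult: "ravg n (\<lambda>e. a * \<Phi> e) = a * ravg n \<Phi>"
  by (induction n arbitrary: \<Phi>) (auto simp: field_simps)

lemma ravg_sum: "ravg n (\<lambda>e. \<Sum>l\<in>L. \<Phi> l e) = (\<Sum>l\<in>L. ravg n (\<Phi> l))"
  by (induction L rule: infinite_finite_induct) (auto simp: ravg_add)

lemma ravg_neg: "ravg n (\<lambda>e. \<Phi> (\<lambda>i. - e i)) = ravg n \<Phi>"
proof (induction n arbitrary: \<Phi>)
  case 0 then show ?case by simp
next
  case (Suc n)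
  have 1: "(\<lambda>i. - (e(n:=s)) i) = (\<lambda>i. - e i)(n := -s)" for e and s :: real
    by auto
  have "ravg n (\<lambda>e. \<Phi> (\<lambda>i. - (e(n:=1)) i)) = ravg n (\<lambda>e. (\<lambda>e. \<Phi> (e(n:=-1))) (\<lambda>i. - e i))"
    by (simp only: 1)
  also have "\<dots> = ravg n (\<lambda>e. \<Phi> (e(n:=-1)))" by (rule Suc.IH)
  finally have a: "ravg n (\<lambda>e. \<Phi> (\<lambda>i. - (e(n:=1)) i)) = ravg n (\<lambda>e. \<Phi> (e(n:=-1)))" .
  have "ravg n (\<lambda>e. \<Phi> (\<lambda>i. - (e(n:=-1)) i)) = ravg n (\<lambda>e. (\<lambda>e. \<Phi> (e(n:=1))) (\<lambda>i. - e i))"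
    by (simp only: 1 minus_minus)
  also have "\<dots> = ravg n (\<lambda>e. \<Phi> (e(n:=1)))" by (rule Suc.IH)
  finally have b: "ravg n (\<lambda>e. \<Phi> (\<lambda>i. - (e(n:=-1)) i)) = ravg n (\<lambda>e. \<Phi> (e(n:=1)))" .
  show ?case using a b by simp
qed

lemma ravg_nonneg: "(\<And>e. valid n e \<Longrightarrow> 0 \<le> \<Phi> e) \<Longrightarrow> 0 \<le> ravg n \<Phi>"
  using ravg_mono[of n "\<lambda>_. 0" \<Phi>] by simp

lemma exp_mid_le: "exp ((a + b) / 2::real) \<le> (exp a + exp b) / 2"
proof -
  have "convex_on UNIV exp" using convex_on_exp[of 1] by simp
  from convex_onD[OF this, of "1/2" a b] show ?thesis by (simp add: field_simps)
qed

lemma ravg_exp_jensen: "exp (ravg n \<Phi>) \<le> ravg n (\<lambda>e. exp (\<Phi> e))"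
proof (induction n arbitrary: \<Phi>)
  case 0 then show ?case by simp
next
  case (Suc n)
  have "exp (ravg (Suc n) \<Phi>) \<le> (exp (ravg n (\<lambda>e. \<Phi> (e(n:=1)))) + exp (ravg n (\<lambda>e. \<Phi> (e(n:=-1))))) / 2"
    using exp_mid_le by simp
  also have "\<dots> \<le> ravg (Suc n) (\<lambda>e. exp (\<Phi> e))"
    using Suc.IH[of "\<lambda>e. \<Phi> (e(n:=1))"] Suc.IH[of "\<lambda>e. \<Phi> (e(n:=-1))"] by simp
  finally show ?case .
qed

lemma cosh_le_exp_sq: "cosh (x::real) \<le> exp (x\<^sup>2 / 2)"
proof -
  have main: "cosh x \<le> exp (x\<^sup>2 / 2)" if "x \<ge> 0" for x :: real
  proof -
    have "- (2*x) * (1/2) + ln (1 + (1/2) * (exp (2*x) - 1)) \<le> (2*x)\<^sup>2 / 8"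
      by (rule Hoeffdings_lemma_aux) (use that in auto)
    moreover have "1 + (1/2) * (exp (2*x) - 1) = exp x * cosh x"
      by (simp add: cosh_def exp_add[symmetric] field_simps mult_exp_exp)
    moreover have "cosh x > 0" by (simp add: cosh_def add_pos_pos)
    ultimately have "ln (cosh x) \<le> x\<^sup>2 / 2"
      by (simp add: ln_mult power2_eq_square field_simps)
    then show ?thesis
      using \<open>cosh x > 0\<close> by (metis exp_le_cancel_iff exp_ln)
  qed
  show ?thesis
  proof (cases "x \<ge> 0")
    case True then show ?thesis by (rule main)
  next
    case False then show ?thesis using main[of "-x"] by simp
  qed
qed

lemma ravg_exp_sum:
  "ravg n (\<lambda>e. exp (\<Sum>i<n. e i * a i)) \<le> exp ((\<Sum>i<n. (a i)\<^sup>2) / 2)"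
proof (induction n)
  case 0 then show ?case by simp
next
  case (Suc n)
  have s: "(\<Sum>i<n. (e(n:=s)) i * a i) = (\<Sum>i<n. e i * a i)" for e s
    by (rule sum.cong) auto
  have "ravg (Suc n) (\<lambda>e. exp (\<Sum>i<Suc n. e i * a i))
      = (ravg n (\<lambda>e. exp (a n) * exp (\<Sum>i<n. e i * a i)) + ravg n (\<lambda>e. exp (- a n) * exp (\<Sum>i<n. e i * a i))) / 2"
    by (simp add: s exp_add[symmetric] add.commute)
  also have "\<dots> = cosh (a n) * ravg n (\<lambda>e. exp (\<Sum>i<n. e i * a i))"
    by (simp add: ravg_cmult cosh_def field_simps)
  also have "\<dots> \<le> exp ((a n)\<^sup>2 / 2) * exp ((\<Sum>i<n. (a i)\<^sup>2) / 2)"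
    by (intro mult_mono cosh_le_exp_sq Suc.IH) (auto intro: ravg_nonneg)
  also have "\<dots> = exp ((\<Sum>i<Suc n. (a i)\<^sup>2) / 2)"
    by (simp add: exp_add[symmetric] field_simps)
  finally show ?case .
qed


lemma sum_upd: "(\<Sum>i<Suc n. (e(n:=s)) i * f i) = (\<Sum>i<n. e i * f i) + s * (f n :: real)"
proof -
  have "(\<Sum>i<n. (e(n:=s)) i * f i) = (\<Sum>i<n. e i * f i)" by (rule sum.cong) auto
  then show ?thesis by simp
qed

lemma rsum_bound:
  assumes "valid n e" "\<forall>i<n. \<bar>t i\<bar> \<le> M"
  shows "\<bar>\<Sum>i<n. e i * t i\<bar> \<le> real n * M"
proof -
  have "\<bar>\<Sum>i<n. e i * t i\<bar> \<le> (\<Sum>i<n. \<bar>e i * t i\<bar>)" by (rule sum_abs)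
  also have "\<dots> \<le> (\<Sum>i<n. M)"
    by (rule sum_mono) (use assms valid_abs in \<open>auto simp: abs_mult\<close>)
  finally show ?thesis by simp
qed

lemma bdd_above_bounded: "\<forall>t\<in>T. \<bar>f t\<bar> \<le> (K::real) \<Longrightarrow> bdd_above (f ` T)"
  by (rule bdd_aboveI[of _ K]) auto

lemma bnd_add:
  fixes f g :: "'a \<Rightarrow> real"
  assumes "\<forall>t\<in>T. \<bar>f t\<bar> \<le> a" "\<forall>t\<in>T. \<bar>g t\<bar> \<le> b"
  shows "\<forall>t\<in>T. \<bar>f t + g t\<bar> \<le> a + b" "\<forall>t\<in>T. \<bar>f t - g t\<bar> \<le> a + b"
    "\<forall>t\<in>T. \<bar>- f t + g t\<bar> \<le> a + b"
proof -
  have *: "\<bar>f t\<bar> \<le> a" "\<bar>g t\<bar> \<le> b" if "t \<in> T" for t using assms that by auto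
  show "\<forall>t\<in>T. \<bar>f t + g t\<bar> \<le> a + b" using * by (auto simp: abs_le_iff) (smt (verit))+
  show "\<forall>t\<in>T. \<bar>f t - g t\<bar> \<le> a + b" using * by (auto simp: abs_le_iff) (smt (verit))+
  show "\<forall>t\<in>T. \<bar>- f t + g t\<bar> \<le> a + b" using * by (auto simp: abs_le_iff) (smt (verit))+
qed

lemma bdd_sum:
  fixes f g :: "'a \<Rightarrow> real"
  assumes "\<forall>t\<in>T. \<bar>f t\<bar> \<le> a" "\<forall>t\<in>T. \<bar>g t\<bar> \<le> b"
  shows "bdd_above ((\<lambda>t. f t + g t) ` T)" "bdd_above ((\<lambda>t. f t - g t) ` T)"
  using bnd_add[OF assms] by (auto intro: bdd_above_bounded)

lemma contraction:
  fixes T :: "(nat \<Rightarrow> real) set" and \<psi> :: "nat \<Rightarrow> (nat \<Rightarrow> real) \<Rightarrow> real" and G :: "real \<Rightarrow> real"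
  assumes T: "T \<noteq> {}"
    and bT: "\<forall>t\<in>T. \<forall>i<n. \<bar>t i\<bar> \<le> M" and b\<psi>: "\<forall>t\<in>T. \<forall>i<n. \<bar>\<psi> i t\<bar> \<le> M"
    and hyp: "\<forall>i<n. \<forall>A K. (\<forall>t\<in>T. \<bar>A t\<bar> \<le> K) \<longrightarrow>
       G (Sup ((\<lambda>t. A t + \<psi> i t) ` T)) + G (Sup ((\<lambda>t. A t - \<psi> i t) ` T))
       \<le> G (Sup ((\<lambda>t. A t + t i) ` T)) + G (Sup ((\<lambda>t. A t - t i) ` T))"
    and B: "\<forall>t\<in>T. \<bar>B t\<bar> \<le> K"
  shows "ravg n (\<lambda>e. G (Sup ((\<lambda>t. (\<Sum>i<n. e i * \<psi> i t) + B t) ` T)))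
       \<le> ravg n (\<lambda>e. G (Sup ((\<lambda>t. (\<Sum>i<n. e i * t i) + B t) ` T)))"
  using bT b\<psi> hyp B
proof (induction n arbitrary: B K)
  case 0 then show ?case by simp
next
  case (Suc n)
  have bT': "\<forall>t\<in>T. \<forall>i<n. \<bar>t i\<bar> \<le> M" and b\<psi>': "\<forall>t\<in>T. \<forall>i<n. \<bar>\<psi> i t\<bar> \<le> M"
    using Suc.prems by auto
  have hyp': "\<forall>i<n. \<forall>A K. (\<forall>t\<in>T. \<bar>A t\<bar> \<le> K) \<longrightarrow>
       G (Sup ((\<lambda>t. A t + \<psi> i t) ` T)) + G (Sup ((\<lambda>t. A t - \<psi> i t) ` T))
       \<le> G (Sup ((\<lambda>t. A t + t i) ` T)) + G (Sup ((\<lambda>t. A t - t i) ` T))"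
    using Suc.prems(3) by auto
  have Bb: "\<forall>t\<in>T. \<bar>B t\<bar> \<le> K" using Suc.prems(4) .
  have psin: "\<forall>t\<in>T. \<bar>\<psi> n t\<bar> \<le> M" "\<forall>t\<in>T. \<bar>t n\<bar> \<le> M" using Suc.prems(1,2) by auto
  have B1: "\<forall>t\<in>T. \<bar>\<psi> n t + B t\<bar> \<le> M + K" "\<forall>t\<in>T. \<bar>- \<psi> n t + B t\<bar> \<le> M + K"
    using bnd_add[OF psin(1) Bb] by auto
  define L where "L s = ravg n (\<lambda>e. G (Sup ((\<lambda>t. (\<Sum>i<n. e i * \<psi> i t) + (s * \<psi> n t + B t)) ` T)))" for s :: real
  define R where "R s = ravg n (\<lambda>e. G (Sup ((\<lambda>t. (\<Sum>i<n. e i * t i) + (s * \<psi> n t + B t)) ` T)))" for s :: real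
  have eqL: "ravg (Suc n) (\<lambda>e. G (Sup ((\<lambda>t. (\<Sum>i<Suc n. e i * \<psi> i t) + B t) ` T))) = (L 1 + L (-1)) / 2"
    by (simp add: L_def sum_upd add.assoc)
  have L1: "L 1 \<le> R 1" unfolding L_def R_def
    using Suc.IH[OF bT' b\<psi>' hyp', of "\<lambda>t. 1 * \<psi> n t + B t" "M + K"] B1 by simp
  have L2: "L (-1) \<le> R (-1)" unfolding L_def R_def
    using Suc.IH[OF bT' b\<psi>' hyp', of "\<lambda>t. -1 * \<psi> n t + B t" "M + K"] B1 by simp
  have "(R 1 + R (-1)) / 2 = ravg n (\<lambda>e. (1/2) * (G (Sup ((\<lambda>t. ((\<Sum>i<n. e i * t i) + B t) + \<psi> n t) ` T))
        + G (Sup ((\<lambda>t. ((\<Sum>i<n. e i * t i) + B t) - \<psi> n t) ` T))))"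
    unfolding R_def ravg_cmult ravg_add by (simp add: algebra_simps)
  also have "\<dots> \<le> ravg n (\<lambda>e. (1/2) * (G (Sup ((\<lambda>t. ((\<Sum>i<n. e i * t i) + B t) + t n) ` T))
        + G (Sup ((\<lambda>t. ((\<Sum>i<n. e i * t i) + B t) - t n) ` T))))"
  proof (rule ravg_mono)
    fix e assume e: "valid n e"
    have AB: "\<forall>t\<in>T. \<bar>(\<Sum>i<n. e i * t i) + B t\<bar> \<le> real n * M + K"
    proof
      fix t assume t: "t \<in> T"
      have "\<bar>\<Sum>i<n. e i * t i\<bar> \<le> real n * M" using rsum_bound[OF e] bT' t by auto
      then show "\<bar>(\<Sum>i<n. e i * t i) + B t\<bar> \<le> real n * M + K" using Bb t by (auto simp: abs_le_iff)
    qed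
    then show "(1/2) * (G (Sup ((\<lambda>t. ((\<Sum>i<n. e i * t i) + B t) + \<psi> n t) ` T))
        + G (Sup ((\<lambda>t. ((\<Sum>i<n. e i * t i) + B t) - \<psi> n t) ` T)))
      \<le> (1/2) * (G (Sup ((\<lambda>t. ((\<Sum>i<n. e i * t i) + B t) + t n) ` T))
        + G (Sup ((\<lambda>t. ((\<Sum>i<n. e i * t i) + B t) - t n) ` T)))"
      using Suc.prems(3)[rule_format, of n "\<lambda>t. (\<Sum>i<n. e i * t i) + B t" "real n * M + K"] AB
      by simp
  qed
  also have "\<dots> = ravg (Suc n) (\<lambda>e. G (Sup ((\<lambda>t. (\<Sum>i<Suc n. e i * t i) + B t) ` T)))"
  proof -
    have f1: "(\<lambda>t. (\<Sum>i<Suc n. (e(n:=1)) i * t i) + B t) = (\<lambda>t. ((\<Sum>i<n. e i * t i) + B t) + t n)" for e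
      by (rule ext) (simp add: sum_upd)
    have f2: "(\<lambda>t. (\<Sum>i<Suc n. (e(n:=-1)) i * t i) + B t) = (\<lambda>t. ((\<Sum>i<n. e i * t i) + B t) - t n)" for e
      by (rule ext) (simp add: sum_upd)
    show ?thesis unfolding ravg_cmult ravg_add by (simp only: ravg.simps f1 f2)
  qed
  finally show ?case using eqL L1 L2 by simp
qed

lemma twopoint_id:
  fixes T :: "(nat \<Rightarrow> real) set"
  assumes T: "T \<noteq> {}" and bA: "\<forall>t\<in>T. \<bar>A t\<bar> \<le> K" and bT: "\<forall>t\<in>T. \<bar>t i\<bar> \<le> M"
    and b\<psi>: "\<forall>t\<in>T. \<bar>\<psi> t\<bar> \<le> M" and lip: "\<forall>s\<in>T. \<forall>t\<in>T. \<psi> s - \<psi> t \<le> \<bar>s i - t i\<bar>"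
  shows "Sup ((\<lambda>t. A t + \<psi> t) ` T) + Sup ((\<lambda>t. A t - \<psi> t) ` T)
       \<le> Sup ((\<lambda>t. A t + t i) ` T) + Sup ((\<lambda>t. A t - t i) ` T)" (is "?a + ?b \<le> ?R")
proof -
  have bd: "bdd_above ((\<lambda>t. A t + \<psi> t) ` T)" "bdd_above ((\<lambda>t. A t - \<psi> t) ` T)"
     "bdd_above ((\<lambda>t. A t + t i) ` T)" "bdd_above ((\<lambda>t. A t - t i) ` T)"
    using bdd_sum[OF bA b\<psi>] bdd_sum[OF bA bT] by auto
  have pt: "A s + \<psi> s + (A t - \<psi> t) \<le> ?R" if s: "s \<in> T" and t: "t \<in> T" for s t
  proof (cases "s i \<ge> t i")
    case True
    have "A s + \<psi> s + (A t - \<psi> t) \<le> (A s + s i) + (A t - t i)" using lip s t True by force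
    also have "\<dots> \<le> ?R" by (intro add_mono cSup_upper bd) (use s t in auto)
    finally show ?thesis .
  next
    case False
    have "A s + \<psi> s + (A t - \<psi> t) \<le> (A t + t i) + (A s - s i)" using lip s t False by force
    also have "\<dots> \<le> ?R" by (intro add_mono cSup_upper bd) (use s t in auto)
    finally show ?thesis .
  qed
  have 1: "?a \<le> ?R - (A t - \<psi> t)" if t: "t \<in> T" for t
  proof (rule cSup_least)
    show "(\<lambda>t. A t + \<psi> t) ` T \<noteq> {}" using T by auto
    fix x assume "x \<in> (\<lambda>t. A t + \<psi> t) ` T"
    then obtain s where "s \<in> T" "x = A s + \<psi> s" by auto
    then show "x \<le> ?R - (A t - \<psi> t)" using pt[of s t] t by simp
  qed
  have "?b \<le> ?R - ?a"
  proof (rule cSup_least)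
    show "(\<lambda>t. A t - \<psi> t) ` T \<noteq> {}" using T by auto
    fix x assume "x \<in> (\<lambda>t. A t - \<psi> t) ` T"
    then obtain t where "t \<in> T" "x = A t - \<psi> t" by auto
    then show "x \<le> ?R - ?a" using 1[of t] by simp
  qed
  then show ?thesis by simp
qed

lemma lift_exp:
  fixes X Y :: "real set"
  assumes "X \<noteq> {}" "Y \<noteq> {}" "bdd_above X" "bdd_above Y" "\<mu> \<ge> 0"
    and pt: "\<forall>x\<in>X. \<forall>y\<in>Y. exp (\<mu> * x) + exp (\<mu> * y) \<le> R"
  shows "exp (\<mu> * Sup X) + exp (\<mu> * Sup Y) \<le> R"
proof (cases "\<mu> = 0")
  case True
  obtain x y where "x \<in> X" "y \<in> Y" using assms by auto
  then show ?thesis using pt True by force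
next
  case False
  then have mu: "\<mu> > 0" using assms by simp
  have 1: "exp (\<mu> * Sup X) \<le> R - exp (\<mu> * y)" if y: "y \<in> Y" for y
  proof -
    have pos: "R - exp (\<mu> * y) > 0"
    proof -
      obtain x where "x \<in> X" using assms by auto
      then show ?thesis using pt y by (smt (verit) exp_gt_zero)
    qed
    have "Sup X \<le> ln (R - exp (\<mu> * y)) / \<mu>"
    proof (rule cSup_least)
      fix x assume "x \<in> X"
      then have "exp (\<mu> * x) \<le> R - exp (\<mu> * y)" using pt y by force
      then have "\<mu> * x \<le> ln (R - exp (\<mu> * y))" using pos by (simp add: ln_ge_iff)
      then show "x \<le> ln (R - exp (\<mu> * y)) / \<mu>" using mu by (simp add: field_simps)
    qed (use assms in auto)
    then have "\<mu> * Sup X \<le> ln (R - exp (\<mu> * y))" using mu by (simp add: field_simps)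
    then show ?thesis using pos by (metis exp_le_cancel_iff exp_ln)
  qed
  have pos2: "R - exp (\<mu> * Sup X) > 0"
  proof -
    obtain y where "y \<in> Y" using assms by auto
    then show ?thesis using 1 by (smt (verit) exp_gt_zero)
  qed
  have "Sup Y \<le> ln (R - exp (\<mu> * Sup X)) / \<mu>"
  proof (rule cSup_least)
    fix y assume "y \<in> Y"
    then have "exp (\<mu> * y) \<le> R - exp (\<mu> * Sup X)" using 1 by force
    then have "\<mu> * y \<le> ln (R - exp (\<mu> * Sup X))" using pos2 by (simp add: ln_ge_iff)
    then show "y \<le> ln (R - exp (\<mu> * Sup X)) / \<mu>" using mu by (simp add: field_simps)
  qed (use assms in auto)
  then have "\<mu> * Sup Y \<le> ln (R - exp (\<mu> * Sup X))" using mu by (simp add: field_simps)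
  then have "exp (\<mu> * Sup Y) \<le> R - exp (\<mu> * Sup X)" using pos2 by (metis exp_le_cancel_iff exp_ln)
  then show ?thesis by simp
qed

lemma twopoint_relu:
  fixes T :: "(nat \<Rightarrow> real) set"
  assumes T: "T \<noteq> {}" and bA: "\<forall>t\<in>T. \<bar>A t\<bar> \<le> K" and bT: "\<forall>t\<in>T. \<bar>t i\<bar> \<le> M" and mu: "\<mu> \<ge> 0"
  shows "exp (\<mu> * Sup ((\<lambda>t. A t + max (t i) 0) ` T)) + exp (\<mu> * Sup ((\<lambda>t. A t - max (t i) 0) ` T))
       \<le> exp (\<mu> * Sup ((\<lambda>t. A t + t i) ` T)) + exp (\<mu> * Sup ((\<lambda>t. A t - t i) ` T))" (is "_ \<le> ?R")
proof -
  define U where "U = Sup ((\<lambda>t. A t + t i) ` T)"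
  define V where "V = Sup ((\<lambda>t. A t - t i) ` T)"
  have bT': "\<forall>t\<in>T. \<bar>max (t i) 0\<bar> \<le> M" using bT by auto
  have bd: "bdd_above ((\<lambda>t. A t + max (t i) 0) ` T)" "bdd_above ((\<lambda>t. A t - max (t i) 0) ` T)"
     "bdd_above ((\<lambda>t. A t + t i) ` T)" "bdd_above ((\<lambda>t. A t - t i) ` T)"
    using bdd_sum[OF bA bT'] bdd_sum[OF bA bT] by auto
  have U: "A r + r i \<le> U" if "r \<in> T" for r unfolding U_def by (intro cSup_upper bd) (use that in auto)
  have V: "A r - r i \<le> V" if "r \<in> T" for r unfolding V_def by (intro cSup_upper bd) (use that in auto)
  have em: "exp (\<mu> * a) \<le> exp (\<mu> * b)" if "a \<le> b" for a b using mu that by (simp add: mult_left_mono)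
  have pt: "exp (\<mu> * (A s + max (s i) 0)) + exp (\<mu> * (A t - max (t i) 0)) \<le> exp (\<mu> * U) + exp (\<mu> * V)"
    if s: "s \<in> T" and t: "t \<in> T" for s t
  proof -
    consider "s i \<ge> 0" "t i \<ge> 0" | "s i \<ge> 0" "t i < 0" | "s i < 0" "t i \<ge> 0" | "s i < 0" "t i < 0" by linarith
    then show ?thesis
    proof cases
      case 1 then show ?thesis using U[OF s] V[OF t] by (intro add_mono em) auto
    next
      case 2 then show ?thesis using U[OF s] V[OF t] by (intro add_mono em) auto
    next
      case 3
      have "exp (\<mu> * (A s + max (s i) 0)) + exp (\<mu> * (A t - max (t i) 0)) = exp (\<mu> * (A t - t i)) + exp (\<mu> * A s)"
        using 3 by simp
      also have "\<dots> \<le> exp (\<mu> * U) + exp (\<mu> * V)"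
        using U[OF t] V[OF s] 3 by (intro add_mono em) auto
      finally show ?thesis by simp
    next
      case 4
      have c2: "2 * exp (\<mu> * x) \<le> exp (\<mu> * (x + a)) + exp (\<mu> * (x - a))" for x a
      proof -
        have "exp (\<mu> * x) = exp (((\<mu> * (x + a)) + (\<mu> * (x - a))) / 2)" by (simp add: algebra_simps)
        also have "\<dots> \<le> (exp (\<mu> * (x + a)) + exp (\<mu> * (x - a))) / 2" by (rule exp_mid_le)
        finally show ?thesis by simp
      qed
      show ?thesis
      proof (cases "A s \<ge> A t")
        case True
        have "exp (\<mu> * (A s + max (s i) 0)) + exp (\<mu> * (A t - max (t i) 0)) \<le> 2 * exp (\<mu> * A s)"
          using 4 True em[of "A t" "A s"] by simp
        also have "\<dots> \<le> exp (\<mu> * (A s + s i)) + exp (\<mu> * (A s - s i))" by (rule c2)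
        also have "\<dots> \<le> exp (\<mu> * U) + exp (\<mu> * V)" using U[OF s] V[OF s] by (intro add_mono em) auto
        finally show ?thesis .
      next
        case False
        have "exp (\<mu> * (A s + max (s i) 0)) + exp (\<mu> * (A t - max (t i) 0)) \<le> 2 * exp (\<mu> * A t)"
          using 4 False em[of "A s" "A t"] by simp
        also have "\<dots> \<le> exp (\<mu> * (A t + t i)) + exp (\<mu> * (A t - t i))" by (rule c2)
        also have "\<dots> \<le> exp (\<mu> * U) + exp (\<mu> * V)" using U[OF t] V[OF t] by (intro add_mono em) auto
        finally show ?thesis .
      qed
    qed
  qed
  show ?thesis unfolding U_def[symmetric] V_def[symmetric]
    by (rule lift_exp) (use T bd mu pt in auto)
qed


definition Lin :: "real \<Rightarrow> (nat \<Rightarrow> real) set \<Rightarrow> (nat \<Rightarrow> real) set" where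
  "Lin c N = {v. \<exists>a w g. (\<Sum>l\<le>a. \<bar>w l\<bar>) \<le> c \<and> (\<forall>l<a. g l \<in> N) \<and>
               v = (\<lambda>i. w 0 + (\<Sum>l<a. w (Suc l) * g l i))}"

definition relu_set :: "(nat \<Rightarrow> real) set \<Rightarrow> (nat \<Rightarrow> real) set" where
  "relu_set N = (\<lambda>v i. max (v i) 0) ` N"

fun NN :: "nat \<Rightarrow> real \<Rightarrow> (nat \<Rightarrow> nat \<Rightarrow> real) \<Rightarrow> nat \<Rightarrow> (nat \<Rightarrow> real) set" where
  "NN m c X 0 = (\<lambda>l i. X i l) ` {..<m}"
| "NN m c X (Suc j) = relu_set (Lin c (NN m c X j))"

definition Pot :: "nat \<Rightarrow> (nat \<Rightarrow> real) set \<Rightarrow> real \<Rightarrow> real" where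
  "Pot n N \<mu> = ravg n (\<lambda>e. exp (\<mu> * Sup ((\<lambda>g. \<Sum>i<n. e i * g i) ` N)))"

definition bnd :: "nat \<Rightarrow> (nat \<Rightarrow> real) set \<Rightarrow> real \<Rightarrow> bool" where
  "bnd n N M \<longleftrightarrow> (\<forall>g\<in>N. \<forall>i<n. \<bar>g i\<bar> \<le> M)"

lemma Lin_zero: "c \<ge> 0 \<Longrightarrow> (\<lambda>i. 0) \<in> Lin c N"
  unfolding Lin_def by (rule CollectI, rule exI[of _ 0], rule exI[of _ "\<lambda>_. 0"]) auto

lemma Lin_bnd:
  assumes "bnd n N M" "M \<ge> 0" "c \<ge> 0"
  shows "bnd n (Lin c N) (c * max 1 M)"
  unfolding bnd_def
proof (intro ballI allI impI)
  fix v i assume v: "v \<in> Lin c N" and i: "i < n"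
  then obtain a w g where w: "(\<Sum>l\<le>a. \<bar>w l\<bar>) \<le> c" "\<forall>l<a. g l \<in> N"
     and v: "v = (\<lambda>i. w 0 + (\<Sum>l<a. w (Suc l) * g l i))" unfolding Lin_def by auto
  have "\<bar>v i\<bar> \<le> \<bar>w 0\<bar> + (\<Sum>l<a. \<bar>w (Suc l) * g l i\<bar>)"
    unfolding v using sum_abs[of "\<lambda>l. w (Suc l) * g l i" "{..<a}"] abs_triangle_ineq[of "w 0" "\<Sum>l<a. w (Suc l) * g l i"]
    by linarith
  also have "\<dots> \<le> \<bar>w 0\<bar> * max 1 M + (\<Sum>l<a. \<bar>w (Suc l)\<bar> * max 1 M)"
  proof (intro add_mono sum_mono)
    show "\<bar>w 0\<bar> \<le> \<bar>w 0\<bar> * max 1 M" by (simp add: mult_le_cancel_left1)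
    fix l assume "l \<in> {..<a}"
    then have "\<bar>g l i\<bar> \<le> M" using w assms(1) i unfolding bnd_def by auto
    then show "\<bar>w (Suc l) * g l i\<bar> \<le> \<bar>w (Suc l)\<bar> * max 1 M"
      by (simp add: abs_mult mult_left_mono)
  qed
  also have "\<dots> = (\<Sum>l\<le>a. \<bar>w l\<bar>) * max 1 M"
    by (simp add: sum.atMost_shift sum_distrib_right distrib_right)
  also have "\<dots> \<le> c * max 1 M" using w by (intro mult_right_mono) auto
  finally show "\<bar>v i\<bar> \<le> c * max 1 M" .
qed

lemma relu_bnd: "bnd n N M \<Longrightarrow> M \<ge> 0 \<Longrightarrow> bnd n (relu_set N) M"
  unfolding bnd_def relu_set_def by force

lemma bnd_bdd: "bnd n N M \<Longrightarrow> valid n e \<Longrightarrow> bdd_above ((\<lambda>g. \<Sum>i<n. e i * g i) ` N)"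
proof (rule bdd_above_bounded[of _ _ "real n * M"])
  assume a: "bnd n N M" "valid n e"
  show "\<forall>g\<in>N. \<bar>\<Sum>i<n. e i * g i\<bar> \<le> real n * M"
  proof
    fix g assume "g \<in> N"
    then have "\<forall>i<n. \<bar>g i\<bar> \<le> M" using a unfolding bnd_def by auto
    then show "\<bar>\<Sum>i<n. e i * g i\<bar> \<le> real n * M" by (rule rsum_bound[OF a(2)])
  qed
qed

lemma exp_max4: "exp (max (max a b) (max c d)) \<le> exp a + exp b + exp c + exp (d::real)"
  by (smt (verit) exp_gt_zero)

lemma Lin_sup:
  assumes N: "N \<noteq> {}" "bnd n N M" and e: "valid n e" and c: "c \<ge> 0"
  shows "Sup ((\<lambda>g. \<Sum>i<n. e i * g i) ` Lin c N) \<le>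
     c * max (max (\<Sum>i<n. e i) (- (\<Sum>i<n. e i)))
             (max (Sup ((\<lambda>g. \<Sum>i<n. e i * g i) ` N)) (Sup ((\<lambda>g. \<Sum>i<n. - e i * g i) ` N)))"
    (is "_ \<le> c * ?Q")
proof (rule cSup_least)
  show "(\<lambda>g. \<Sum>i<n. e i * g i) ` Lin c N \<noteq> {}" using Lin_zero[OF c] by blast
  have eneg: "valid n (\<lambda>i. - e i)" using e unfolding valid_def by force
  fix x assume "x \<in> (\<lambda>g. \<Sum>i<n. e i * g i) ` Lin c N"
  then obtain a w g where w: "(\<Sum>l\<le>a. \<bar>w l\<bar>) \<le> c" "\<forall>l<a. g l \<in> N"
     and x: "x = (\<Sum>i<n. e i * (w 0 + (\<Sum>l<a. w (Suc l) * g l i)))" unfolding Lin_def by auto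
  have Q0: "?Q \<ge> 0" by linarith
  have x2: "x = w 0 * (\<Sum>i<n. e i) + (\<Sum>l<a. w (Suc l) * (\<Sum>i<n. e i * g l i))"
  proof -
    have "x = (\<Sum>i<n. e i * w 0) + (\<Sum>i<n. \<Sum>l<a. w (Suc l) * (e i * g l i))"
      unfolding x distrib_left sum.distrib sum_distrib_left by (simp only: mult.left_commute)
    also have "(\<Sum>i<n. \<Sum>l<a. w (Suc l) * (e i * g l i)) = (\<Sum>l<a. \<Sum>i<n. w (Suc l) * (e i * g l i))"
      by (rule sum.swap)
    also have "\<dots> = (\<Sum>l<a. w (Suc l) * (\<Sum>i<n. e i * g l i))"
      by (simp only: sum_distrib_left)
    also have "(\<Sum>i<n. e i * w 0) = w 0 * (\<Sum>i<n. e i)"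
      by (simp only: sum_distrib_left mult.commute)
    finally show ?thesis .
  qed
  have "x \<le> \<bar>w 0\<bar> * ?Q + (\<Sum>l<a. \<bar>w (Suc l)\<bar> * ?Q)"
    unfolding x2
  proof (intro add_mono sum_mono)
    have "w 0 * (\<Sum>i<n. e i) \<le> \<bar>w 0\<bar> * \<bar>\<Sum>i<n. e i\<bar>"
      using abs_ge_self[of "w 0 * (\<Sum>i<n. e i)"] by (simp only: abs_mult)
    also have "\<dots> \<le> \<bar>w 0\<bar> * ?Q" by (intro mult_left_mono) auto
    finally show "w 0 * (\<Sum>i<n. e i) \<le> \<bar>w 0\<bar> * ?Q" .
    fix l assume "l \<in> {..<a}"
    then have gl: "g l \<in> N" using w by auto
    have "(\<Sum>i<n. e i * g l i) \<le> Sup ((\<lambda>g. \<Sum>i<n. e i * g i) ` N)"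
      by (intro cSup_upper bnd_bdd[OF N(2) e]) (use gl in auto)
    moreover have "(\<Sum>i<n. - e i * g l i) \<le> Sup ((\<lambda>g. \<Sum>i<n. - e i * g i) ` N)"
      by (intro cSup_upper bnd_bdd[OF N(2) eneg]) (use gl in auto)
    moreover have "(\<Sum>i<n. - e i * g l i) = - (\<Sum>i<n. e i * g l i)" by (simp add: sum_negf)
    ultimately have "\<bar>\<Sum>i<n. e i * g l i\<bar> \<le> ?Q" by linarith
    then have "\<bar>w (Suc l)\<bar> * \<bar>\<Sum>i<n. e i * g l i\<bar> \<le> \<bar>w (Suc l)\<bar> * ?Q"
      by (intro mult_left_mono) auto
    moreover have "w (Suc l) * (\<Sum>i<n. e i * g l i) \<le> \<bar>w (Suc l)\<bar> * \<bar>\<Sum>i<n. e i * g l i\<bar>"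
      using abs_ge_self[of "w (Suc l) * (\<Sum>i<n. e i * g l i)"] by (simp only: abs_mult)
    ultimately have "w (Suc l) * (\<Sum>i<n. e i * g l i) \<le> \<bar>w (Suc l)\<bar> * ?Q" by linarith
    then show "w (Suc l) * (\<Sum>i<n. e i * g l i) \<le> \<bar>w (Suc l)\<bar> * ?Q" .
  qed
  also have "\<dots> = (\<Sum>l\<le>a. \<bar>w l\<bar>) * ?Q"
    by (simp only: sum.atMost_shift sum_distrib_right distrib_right)
  also have "\<dots> \<le> c * ?Q" using w Q0 by (intro mult_right_mono) auto
  finally show "x \<le> c * ?Q" .
qed

lemma Pot_Lin:
  assumes N: "N \<noteq> {}" "bnd n N M" and mu: "\<mu> \<ge> 0" and c: "c \<ge> 0"
  shows "Pot n (Lin c N) \<mu> \<le> 2 * exp (real n * (\<mu> * c)\<^sup>2 / 2) + 2 * Pot n N (\<mu> * c)"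
proof -
  define S where "S e = (\<Sum>i<n. e i)" for e :: "nat \<Rightarrow> real"
  define SP where "SP e = Sup ((\<lambda>g. \<Sum>i<n. e i * g i) ` N)" for e
  have SM: "Sup ((\<lambda>g. \<Sum>i<n. - e i * g i) ` N) = SP (\<lambda>i. - e i)" for e unfolding SP_def by simp
  have "Pot n (Lin c N) \<mu> \<le> ravg n (\<lambda>e. exp (\<mu> * c * S e) + exp (\<mu> * c * S (\<lambda>i. - e i))
          + exp (\<mu> * c * SP e) + exp (\<mu> * c * SP (\<lambda>i. - e i)))"
    unfolding Pot_def
  proof (rule ravg_mono)
    fix e assume e: "valid n e"
    have "\<mu> * Sup ((\<lambda>g. \<Sum>i<n. e i * g i) ` Lin c N) \<le> \<mu> * (c * max (max (S e) (- S e)) (max (SP e) (SP (\<lambda>i. - e i))))"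
      using Lin_sup[OF N e c] mu unfolding S_def SP_def by (simp add: mult_left_mono)
    also have "\<dots> = max (max (\<mu> * c * S e) (\<mu> * c * S (\<lambda>i. - e i))) (max (\<mu> * c * SP e) (\<mu> * c * SP (\<lambda>i. - e i)))"
      using mu c by (simp add: max_mult_distrib_left S_def sum_negf mult.assoc)
    finally have "exp (\<mu> * Sup ((\<lambda>g. \<Sum>i<n. e i * g i) ` Lin c N)) \<le> exp (max (max (\<mu> * c * S e) (\<mu> * c * S (\<lambda>i. - e i))) (max (\<mu> * c * SP e) (\<mu> * c * SP (\<lambda>i. - e i))))"
      by simp
    then show "exp (\<mu> * Sup ((\<lambda>g. \<Sum>i<n. e i * g i) ` Lin c N)) \<le> exp (\<mu> * c * S e) + exp (\<mu> * c * S (\<lambda>i. - e i))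
          + exp (\<mu> * c * SP e) + exp (\<mu> * c * SP (\<lambda>i. - e i))"
      using exp_max4[of "\<mu> * c * S e" "\<mu> * c * S (\<lambda>i. - e i)" "\<mu> * c * SP e" "\<mu> * c * SP (\<lambda>i. - e i)"] by linarith
  qed
  also have "\<dots> = ravg n (\<lambda>e. exp (\<mu> * c * S e)) + ravg n (\<lambda>e. exp (\<mu> * c * S e))
        + Pot n N (\<mu> * c) + Pot n N (\<mu> * c)"
    unfolding ravg_add ravg_neg[of n "\<lambda>e. exp (\<mu> * c * S e)"] ravg_neg[of n "\<lambda>e. exp (\<mu> * c * SP e)"]
    by (simp add: Pot_def SP_def)
  also have "ravg n (\<lambda>e. exp (\<mu> * c * S e)) \<le> exp (real n * (\<mu> * c)\<^sup>2 / 2)"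
  proof -
    have "ravg n (\<lambda>e. exp (\<mu> * c * S e)) = ravg n (\<lambda>e. exp (\<Sum>i<n. e i * (\<mu> * c)))"
      unfolding S_def by (simp add: sum_distrib_left mult_ac)
    also have "\<dots> \<le> exp ((\<Sum>i<n. (\<mu> * c)\<^sup>2) / 2)" by (rule ravg_exp_sum)
    finally show ?thesis by simp
  qed
  finally show ?thesis by simp
qed

lemma Pot_relu:
  assumes N: "N \<noteq> {}" "bnd n N M" and mu: "\<mu> \<ge> 0"
  shows "Pot n (relu_set N) \<mu> \<le> Pot n N \<mu>"
proof -
  have eq1: "Sup ((\<lambda>g. \<Sum>i<n. e i * g i) ` relu_set N) = Sup ((\<lambda>t. (\<Sum>i<n. e i * max (t i) 0) + 0) ` N)" for e
    unfolding relu_set_def image_image by simp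
  have eq2: "Sup ((\<lambda>g. \<Sum>i<n. e i * g i) ` N) = Sup ((\<lambda>t. (\<Sum>i<n. e i * t i) + 0) ` N)" for e
    by simp
  have "ravg n (\<lambda>e. (\<lambda>r. exp (\<mu> * r)) (Sup ((\<lambda>t. (\<Sum>i<n. e i * max (t i) 0) + 0) ` N)))
      \<le> ravg n (\<lambda>e. (\<lambda>r. exp (\<mu> * r)) (Sup ((\<lambda>t. (\<Sum>i<n. e i * t i) + 0) ` N)))"
  proof (rule contraction[where M = "\<bar>M\<bar>" and K = 0])
    show "N \<noteq> {}" by fact
    show "\<forall>t\<in>N. \<forall>i<n. \<bar>t i\<bar> \<le> \<bar>M\<bar>" using N(2) unfolding bnd_def by force
    show "\<forall>t\<in>N. \<forall>i<n. \<bar>max (t i) 0\<bar> \<le> \<bar>M\<bar>" using N(2) unfolding bnd_def by force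
    show "\<forall>t\<in>N. \<bar>0::real\<bar> \<le> 0" by simp
    show "\<forall>i<n. \<forall>(A::(nat\<Rightarrow>real)\<Rightarrow>real) (K::real). (\<forall>t\<in>N. \<bar>A t\<bar> \<le> K) \<longrightarrow>
       exp (\<mu> * Sup ((\<lambda>t. A t + max (t i) 0) ` N)) + exp (\<mu> * Sup ((\<lambda>t. A t - max (t i) 0) ` N))
       \<le> exp (\<mu> * Sup ((\<lambda>t. A t + t i) ` N)) + exp (\<mu> * Sup ((\<lambda>t. A t - t i) ` N))"
    proof (intro allI impI)
      fix i :: nat and A :: "(nat\<Rightarrow>real)\<Rightarrow>real" and K :: real assume i: "i < n" and A: "\<forall>t\<in>N. \<bar>A t\<bar> \<le> K"
      show "exp (\<mu> * Sup ((\<lambda>t. A t + max (t i) 0) ` N)) + exp (\<mu> * Sup ((\<lambda>t. A t - max (t i) 0) ` N))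
       \<le> exp (\<mu> * Sup ((\<lambda>t. A t + t i) ` N)) + exp (\<mu> * Sup ((\<lambda>t. A t - t i) ` N))"
        by (rule twopoint_relu[OF N(1) A _ mu, where M = M]) (use N(2) i in \<open>auto simp: bnd_def\<close>)
    qed
  qed
  then show ?thesis unfolding Pot_def eq1 eq2 by simp
qed

lemma NN_ne: "m \<ge> 1 \<Longrightarrow> c \<ge> 0 \<Longrightarrow> NN m c X j \<noteq> {}"
proof (induction j)
  case 0 then have "0 \<in> {..<m}" by simp
  then show ?case by auto
next
  case (Suc j) then show ?case using Lin_zero[of c "NN m c X j"] by (auto simp: relu_set_def)
qed

lemma NN_bnd:
  assumes X: "\<forall>i<n. \<forall>l<m. \<bar>X i l\<bar> \<le> 1" and c: "c \<ge> 0"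
  shows "bnd n (NN m c X j) (max 1 c ^ j)"
proof (induction j)
  case 0 then show ?case using X unfolding bnd_def by auto
next
  case (Suc j)
  have M1: "max 1 c ^ j \<ge> 1" by simp
  have "bnd n (Lin c (NN m c X j)) (c * max 1 (max 1 c ^ j))"
    by (rule Lin_bnd[OF Suc.IH _ c]) (use M1 in linarith)
  moreover have "c * max 1 (max 1 c ^ j) \<le> max 1 c ^ Suc j"
  proof -
    have "c * max 1 (max 1 c ^ j) = c * max 1 c ^ j" using M1 by simp
    also have "\<dots> \<le> max 1 c * max 1 c ^ j" by (intro mult_right_mono) auto
    finally show ?thesis by simp
  qed
  ultimately have "bnd n (Lin c (NN m c X j)) (max 1 c ^ Suc j)"
    unfolding bnd_def by (meson order_trans)
  then show ?case by (simp add: relu_bnd)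
qed

lemma Pot_NN0:
  assumes X: "\<forall>i<n. \<forall>l<m. \<bar>X i l\<bar> \<le> 1" and m: "m \<ge> 1" and mu: "\<mu> \<ge> 0"
  shows "Pot n (NN m c X 0) \<mu> \<le> real m * exp (real n * \<mu>\<^sup>2 / 2)"
proof -
  have "Pot n (NN m c X 0) \<mu> \<le> ravg n (\<lambda>e. \<Sum>l<m. exp (\<Sum>i<n. e i * (\<mu> * X i l)))"
    unfolding Pot_def
  proof (rule ravg_mono)
    fix e assume e: "valid n e"
    have fin: "finite ((\<lambda>g. \<Sum>i<n. e i * g i) ` NN m c X 0)" by simp
    have "0 \<in> {..<m}" using m by simp
    then have ne: "(\<lambda>g. \<Sum>i<n. e i * g i) ` NN m c X 0 \<noteq> {}" by auto
    have "Sup ((\<lambda>g. \<Sum>i<n. e i * g i) ` NN m c X 0) \<in> (\<lambda>g. \<Sum>i<n. e i * g i) ` NN m c X 0"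
      using Max_in[OF fin ne] cSup_eq_Max[OF fin ne] by simp
    then obtain l where l: "l < m" "Sup ((\<lambda>g. \<Sum>i<n. e i * g i) ` NN m c X 0) = (\<Sum>i<n. e i * X i l)"
      by auto
    have "exp (\<mu> * Sup ((\<lambda>g. \<Sum>i<n. e i * g i) ` NN m c X 0)) = exp (\<Sum>i<n. e i * (\<mu> * X i l))"
      unfolding l(2) by (simp add: sum_distrib_left mult_ac)
    also have "\<dots> \<le> (\<Sum>l<m. exp (\<Sum>i<n. e i * (\<mu> * X i l)))"
      by (rule member_le_sum[where f = "\<lambda>l. exp (\<Sum>i<n. e i * (\<mu> * X i l))"]) (use l in auto)
    finally show "exp (\<mu> * Sup ((\<lambda>g. \<Sum>i<n. e i * g i) ` NN m c X 0)) \<le> (\<Sum>l<m. exp (\<Sum>i<n. e i * (\<mu> * X i l)))" .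
  qed
  also have "\<dots> = (\<Sum>l<m. ravg n (\<lambda>e. exp (\<Sum>i<n. e i * (\<mu> * X i l))))" by (rule ravg_sum)
  also have "\<dots> \<le> (\<Sum>l<m. exp (real n * \<mu>\<^sup>2 / 2))"
  proof (rule sum_mono)
    fix l assume l: "l \<in> {..<m}"
    have "ravg n (\<lambda>e. exp (\<Sum>i<n. e i * (\<mu> * X i l))) \<le> exp ((\<Sum>i<n. (\<mu> * X i l)\<^sup>2) / 2)" by (rule ravg_exp_sum)
    also have "\<dots> \<le> exp ((\<Sum>i<n. \<mu>\<^sup>2) / 2)"
    proof -
      have "(\<mu> * X i l)\<^sup>2 \<le> \<mu>\<^sup>2" if "i < n" for i
      proof -
        have "\<bar>X i l\<bar> \<le> 1" using X that l by auto
        then have "\<bar>X i l\<bar>\<^sup>2 \<le> 1" by (intro power_le_one) auto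
        then have "(X i l)\<^sup>2 \<le> 1" by simp
        then show ?thesis by (simp add: power_mult_distrib mult_left_le)
      qed
      then show ?thesis by (intro exp_mono divide_right_mono sum_mono) auto
    qed
    finally show "ravg n (\<lambda>e. exp (\<Sum>i<n. e i * (\<mu> * X i l))) \<le> exp (real n * \<mu>\<^sup>2 / 2)" by simp
  qed
  finally show ?thesis by simp
qed


lemma exp_sq_mono: "0 \<le> a \<Longrightarrow> a \<le> b \<Longrightarrow> exp (real n * a\<^sup>2 / 2) \<le> exp (real n * b\<^sup>2 / 2)"
  by (intro exp_mono divide_right_mono mult_left_mono power_mono) auto

lemma Pot_step_arith:
  assumes "E \<ge> 0" "P \<le> 2 ^ j * (real m + real j) * E" "Q \<le> E"
  shows "2 * Q + 2 * P \<le> 2 ^ Suc j * (real m + real (Suc j)) * (E::real)"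
proof -
  have "(2::real) \<le> 2 ^ Suc j" by (rule self_le_power) auto
  then have "2 * E \<le> 2 ^ Suc j * E" using assms(1) by (intro mult_right_mono) auto
  then have "2 * Q + 2 * P \<le> 2 ^ Suc j * E + 2 ^ Suc j * (real m + real j) * E"
    using assms by simp
  also have "\<dots> = 2 ^ Suc j * (real m + real (Suc j)) * E" by (simp add: algebra_simps)
  finally show ?thesis .
qed

lemma Pot_NN:
  assumes X: "\<forall>i<n. \<forall>l<m. \<bar>X i l\<bar> \<le> 1" and m: "m \<ge> 1" and c: "c \<ge> 0" and mu: "\<mu> \<ge> 0"
  shows "Pot n (NN m c X j) \<mu> \<le> 2 ^ j * (real m + real j) * exp (real n * (\<mu> * max 1 c ^ j)\<^sup>2 / 2)"
  using mu
proof (induction j arbitrary: \<mu>)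
  case 0 then show ?case using Pot_NN0[OF X m, of \<mu> c] by simp
next
  case (Suc j)
  define M where "M = max 1 c ^ j"
  define M' where "M' = max 1 c ^ Suc j"
  have M1: "M \<ge> 1" unfolding M_def by simp
  have bN: "bnd n (NN m c X j) M" unfolding M_def by (rule NN_bnd[OF X c])
  have neN: "NN m c X j \<noteq> {}" using NN_ne[OF m c] .
  have bL: "bnd n (Lin c (NN m c X j)) (c * max 1 M)" by (rule Lin_bnd[OF bN _ c]) (use M1 in auto)
  have neL: "Lin c (NN m c X j) \<noteq> {}" using Lin_zero[OF c] by blast
  have mc: "\<mu> * c \<ge> 0" using Suc.prems c by simp
  have "Pot n (NN m c X (Suc j)) \<mu> \<le> Pot n (Lin c (NN m c X j)) \<mu>"
    using Pot_relu[OF neL bL Suc.prems] by simp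
  also have "\<dots> \<le> 2 * exp (real n * (\<mu> * c)\<^sup>2 / 2) + 2 * Pot n (NN m c X j) (\<mu> * c)"
    by (rule Pot_Lin[OF neN bN Suc.prems c])
  also have "\<dots> \<le> 2 ^ Suc j * (real m + real (Suc j)) * exp (real n * (\<mu> * M')\<^sup>2 / 2)"
  proof (rule Pot_step_arith)
    show "exp (real n * (\<mu> * M')\<^sup>2 / 2) \<ge> 0" by simp
    have cM': "c \<le> M'"
    proof -
      have "c \<le> max 1 c" by simp
      also have "\<dots> \<le> max 1 c ^ Suc j" by (rule self_le_power) auto
      finally show ?thesis unfolding M'_def .
    qed
    show "exp (real n * (\<mu> * c)\<^sup>2 / 2) \<le> exp (real n * (\<mu> * M')\<^sup>2 / 2)"
      using cM' mc Suc.prems by (intro exp_sq_mono) (auto simp: mult_left_mono)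
    have "c * M \<le> M'" unfolding M'_def M_def using c by (simp add: mult_right_mono)
    then have "\<mu> * c * M \<le> \<mu> * M'" using Suc.prems by (simp add: mult.assoc mult_left_mono)
    then have "exp (real n * (\<mu> * c * M)\<^sup>2 / 2) \<le> exp (real n * (\<mu> * M')\<^sup>2 / 2)"
      using mc M1 by (intro exp_sq_mono) auto
    moreover have "Pot n (NN m c X j) (\<mu> * c) \<le> 2 ^ j * (real m + real j) * exp (real n * (\<mu> * c * M)\<^sup>2 / 2)"
      using Suc.IH[OF mc] unfolding M_def .
    moreover have "(0::real) \<le> 2 ^ j * (real m + real j)" by simp
    ultimately show "Pot n (NN m c X j) (\<mu> * c) \<le> 2 ^ j * (real m + real j) * exp (real n * (\<mu> * M')\<^sup>2 / 2)"
      by (meson mult_left_mono order_trans)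
  qed
  finally show ?case unfolding M'_def .
qed

lemma Pot_out:
  assumes X: "\<forall>i<n. \<forall>l<m. \<bar>X i l\<bar> \<le> 1" and m: "m \<ge> 1" and c: "c \<ge> 0" and mu: "\<mu> \<ge> 0"
    and co: "co \<ge> 0" and a0: "max 1 c ^ k \<le> a0"
  shows "Pot n (Lin co (NN m c X k)) \<mu> \<le> 2 ^ Suc k * (real m + real (Suc k)) * exp (real n * (\<mu> * (co * a0))\<^sup>2 / 2)"
proof -
  define M where "M = max 1 c ^ k"
  have M1: "M \<ge> 1" unfolding M_def by simp
  have a1: "a0 \<ge> 1" using M1 a0 unfolding M_def by linarith
  have bN: "bnd n (NN m c X k) M" unfolding M_def by (rule NN_bnd[OF X c])
  have neN: "NN m c X k \<noteq> {}" using NN_ne[OF m c] .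
  have mc: "\<mu> * co \<ge> 0" using mu co by simp
  have "Pot n (Lin co (NN m c X k)) \<mu> \<le> 2 * exp (real n * (\<mu> * co)\<^sup>2 / 2) + 2 * Pot n (NN m c X k) (\<mu> * co)"
    by (rule Pot_Lin[OF neN bN mu co])
  also have "\<dots> \<le> 2 ^ Suc k * (real m + real (Suc k)) * exp (real n * (\<mu> * (co * a0))\<^sup>2 / 2)"
  proof (rule Pot_step_arith)
    show "exp (real n * (\<mu> * (co * a0))\<^sup>2 / 2) \<ge> 0" by simp
    have "\<mu> * co * 1 \<le> \<mu> * co * a0" using mc a1 by (intro mult_left_mono) auto
    then have "\<mu> * co * 1 \<le> \<mu> * (co * a0)" by (simp add: mult.assoc)
    then show "exp (real n * (\<mu> * co)\<^sup>2 / 2) \<le> exp (real n * (\<mu> * (co * a0))\<^sup>2 / 2)"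
      using mc by (intro exp_sq_mono) auto
    have "\<mu> * co * M \<le> \<mu> * (co * a0)" using mc a0 unfolding M_def by (simp add: mult.assoc[symmetric] mult_left_mono)
    then have "exp (real n * (\<mu> * co * M)\<^sup>2 / 2) \<le> exp (real n * (\<mu> * (co * a0))\<^sup>2 / 2)"
      using mc M1 by (intro exp_sq_mono) auto
    moreover have "Pot n (NN m c X k) (\<mu> * co) \<le> 2 ^ k * (real m + real k) * exp (real n * (\<mu> * co * M)\<^sup>2 / 2)"
      using Pot_NN[OF X m c mc] unfolding M_def .
    moreover have "(0::real) \<le> 2 ^ k * (real m + real k)" by simp
    ultimately show "Pot n (NN m c X k) (\<mu> * co) \<le> 2 ^ k * (real m + real k) * exp (real n * (\<mu> * (co * a0))\<^sup>2 / 2)"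
      by (meson mult_left_mono order_trans)
  qed
  finally show ?thesis .
qed

lemma Rad_from_Pot:
  assumes P: "\<And>\<mu>. \<mu> \<ge> 0 \<Longrightarrow> Pot n Ow \<mu> \<le> L * exp (real n * (\<mu> * B)\<^sup>2 / 2)"
    and B: "B > 0" and n: "n \<ge> 1" and K: "K > 0" and L: "L > 0" "ln L \<le> 2 * K"
  shows "ravg n (\<lambda>e. Sup ((\<lambda>g. \<Sum>i<n. e i * g i) ` Ow)) \<le> 2 * B * sqrt (real n) * sqrt K"
proof -
  define R where "R = ravg n (\<lambda>e. Sup ((\<lambda>g. \<Sum>i<n. e i * g i) ` Ow))"
  define \<mu> where "\<mu> = 2 * sqrt K / (B * sqrt (real n))"
  have sn: "sqrt (real n) > 0" using n by simp
  have sK: "sqrt K > 0" using K by simp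
  have mu: "\<mu> > 0" unfolding \<mu>_def using sn sK B by simp
  have "exp (\<mu> * R) = exp (ravg n (\<lambda>e. \<mu> * Sup ((\<lambda>g. \<Sum>i<n. e i * g i) ` Ow)))"
    unfolding R_def ravg_cmult ..
  also have "\<dots> \<le> Pot n Ow \<mu>" unfolding Pot_def by (rule ravg_exp_jensen)
  also have "\<dots> \<le> L * exp (real n * (\<mu> * B)\<^sup>2 / 2)" using P mu by simp
  finally have "\<mu> * R \<le> ln (L * exp (real n * (\<mu> * B)\<^sup>2 / 2))"
    using L by (simp add: ln_ge_iff)
  also have "\<dots> = ln L + real n * (\<mu> * B)\<^sup>2 / 2" using L by (simp add: ln_mult)
  finally have "\<mu> * R \<le> 2 * K + real n * (\<mu> * B)\<^sup>2 / 2" using L by linarith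
  then have "R \<le> 2 * K / \<mu> + real n * \<mu> * B\<^sup>2 / 2"
    using mu by (simp add: field_simps power2_eq_square)
  also have "2 * K / \<mu> = B * sqrt (real n) * sqrt K"
  proof -
    have "K = sqrt K * sqrt K" using K by simp
    then show ?thesis unfolding \<mu>_def using sK sn B by (simp add: field_simps)
  qed
  also have "real n * \<mu> * B\<^sup>2 / 2 = B * sqrt (real n) * sqrt K"
  proof -
    have "real n = sqrt (real n) * sqrt (real n)" by simp
    then show ?thesis unfolding \<mu>_def using sK sn B by (simp add: field_simps power2_eq_square)
  qed
  finally show ?thesis unfolding R_def by (simp add: mult_ac)
qed

lemma lnL_bound:
  fixes k m :: nat
  shows "ln (2 ^ Suc k * (real m + real (Suc k))) \<le> 2 * (real k + 2 + ln (real m + 1))"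
proof -
  have e: "ln (2 ^ Suc k * (real m + real (Suc k))) = real (Suc k) * ln 2 + ln (real m + real (Suc k))"
  proof -
    have "ln (2 ^ Suc k * (real m + real (Suc k))) = ln (2 ^ Suc k) + ln (real m + real (Suc k))"
      using ln_mult[of "(2::real)^Suc k" "real m + real (Suc k)"] by simp
    also have "ln ((2::real) ^ Suc k) = real (Suc k) * ln 2" by (rule ln_realpow)
    finally show ?thesis .
  qed
  have "real m + real (Suc k) \<le> (real m + 1) * (real k + 1)" by (simp add: algebra_simps)
  then have "ln (real m + real (Suc k)) \<le> ln ((real m + 1) * (real k + 1))" by simp
  also have "\<dots> = ln (real m + 1) + ln (real k + 1)" by (simp add: ln_mult)
  finally have a: "ln (real m + real (Suc k)) \<le> ln (real m + 1) + ln (real k + 1)" .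
  have b: "ln (real k + 1) \<le> real k" using ln_le_minus_one[of "real k + 1"] by simp
  have c: "ln (2::real) \<le> 1" using ln_le_minus_one[of 2] by simp
  have d: "real (Suc k) * ln 2 \<le> real (Suc k) * 1" by (rule mult_left_mono[OF c]) simp
  have f: "ln (real m + 1) \<ge> 0" by simp
  have g: "real (Suc k) = real k + 1" by simp
  show ?thesis unfolding e using a b d f g by argo
qed


lemma col_le_pq:
  assumes q: "1 \<le> q" and j: "j < b"
  shows "(\<Sum>i\<le>a. \<bar>V i j\<bar>) \<le> pq_norm 1 q a b V"
proof -
  define col where "col j = (\<Sum>i\<le>a. \<bar>V i j\<bar> powr 1) powr (1 / 1)" for j
  have colj: "col j = (\<Sum>i\<le>a. \<bar>V i j\<bar>)" for j unfolding col_def by simp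
  have col0: "col j \<ge> 0" for j unfolding colj by (simp add: sum_nonneg)
  show ?thesis
  proof (cases q)
    case PInf
    have "col j \<le> Max (col ` {..<b})" by (rule Max_ge) (use j in auto)
    then show ?thesis unfolding pq_norm_def col_def[symmetric] Let_def using PInf colj by simp
  next
    case MInf then show ?thesis using q by simp
  next
    case (real r)
    then have r: "r \<ge> 1" using q by simp
    have "col j = (col j powr r) powr (1 / r)" using r col0 by (simp add: powr_powr)
    also have "\<dots> \<le> (\<Sum>j<b. col j powr r) powr (1 / r)"
    proof (rule powr_mono2)
      show "0 \<le> 1 / r" using r by simp
      show "0 \<le> col j powr r" by simp
      show "col j powr r \<le> (\<Sum>j<b. col j powr r)"
        by (rule member_le_sum[where f = "\<lambda>j. col j powr r"]) (use j in auto)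
    qed
    finally show ?thesis unfolding pq_norm_def col_def[symmetric] Let_def using real colj by simp
  qed
qed

lemma hidden_NN:
  "\<forall>ds Xs j. length Vs < length ds \<longrightarrow>
     (\<forall>r<length Vs. \<forall>col<ds ! Suc r. (\<Sum>l\<le>ds ! r. \<bar>(Vs ! r) l col\<bar>) \<le> c) \<longrightarrow>
     (\<forall>l<ds ! 0. (\<lambda>i. Xs i l) \<in> NN m c X j) \<longrightarrow>
     (\<forall>l<ds ! length Vs. (\<lambda>i. hidden ds Vs (Xs i) l) \<in> NN m c X (j + length Vs))"
proof (induction Vs)
  case Nil
  show ?case by (intro allI impI) (case_tac ds; simp)
next
  case (Cons V Vs)
  show ?case
  proof (intro allI impI)
    fix ds Xs j l
    assume len: "length (V # Vs) < length ds"
      and cols: "\<forall>r<length (V # Vs). \<forall>col<ds ! Suc r. (\<Sum>l\<le>ds ! r. \<bar>((V # Vs) ! r) l col\<bar>) \<le> c"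
      and inp: "\<forall>l<ds ! 0. (\<lambda>i. Xs i l) \<in> NN m c X j"
      and l: "l < ds ! length (V # Vs)"
    obtain a ds' where ds: "ds = a # ds'" using len by (cases ds) auto
    define Xs' where "Xs' i = relu (affine_apply V a (Xs i))" for i
    have hid: "hidden ds (V # Vs) (Xs i) = hidden ds' Vs (Xs' i)" for i unfolding ds Xs'_def by simp
    have len': "length Vs < length ds'" using len ds by simp
    have cols': "\<forall>r<length Vs. \<forall>col<ds' ! Suc r. (\<Sum>l\<le>ds' ! r. \<bar>(Vs ! r) l col\<bar>) \<le> c"
      using cols ds by fastforce
    have inp': "\<forall>l<ds' ! 0. (\<lambda>i. Xs' i l) \<in> NN m c X (Suc j)"
    proof (intro allI impI)
      fix l assume l: "l < ds' ! 0"
      have cl: "(\<Sum>t\<le>a. \<bar>V t l\<bar>) \<le> c" using cols[rule_format, of 0 l] l ds by simp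
      have "(\<lambda>i. V 0 l + (\<Sum>t<a. V (Suc t) l * Xs i t)) \<in> Lin c (NN m c X j)"
        unfolding Lin_def
        by (rule CollectI, rule exI[of _ a], rule exI[of _ "\<lambda>t. V t l"], rule exI[of _ "\<lambda>t i. Xs i t"])
           (use cl inp ds in auto)
      then have "(\<lambda>v i. max (v i) 0) (\<lambda>i. V 0 l + (\<Sum>t<a. V (Suc t) l * Xs i t)) \<in> NN m c X (Suc j)"
        unfolding NN.simps relu_set_def by (rule imageI)
      then show "(\<lambda>i. Xs' i l) \<in> NN m c X (Suc j)"
        unfolding Xs'_def relu_def affine_apply_def by simp
    qed
    have l': "l < ds' ! length Vs" using l ds by simp
    have "(\<lambda>i. hidden ds' Vs (Xs' i) l) \<in> NN m c X (Suc j + length Vs)"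
      using Cons.IH len' cols' inp' l' by blast
    then show "(\<lambda>i. hidden ds (V # Vs) (Xs i) l) \<in> NN m c X (j + length (V # Vs))"
      unfolding hid by simp
  qed
qed

lemma net_in_class:
  assumes F: "F \<in> relu_nets k (m1 # dh @ [1]) 1 q c co" and q: "1 \<le> q"
    and dh: "length dh = k"
  shows "(\<lambda>i. F (X i) 0) \<in> Lin co (NN m1 c X k)"
proof -
  define ds where "ds = m1 # dh @ [1]"
  obtain Vs where Vs: "length Vs = k + 1" "length ds = k + 2"
     "\<forall>i<k. pq_norm 1 q (ds ! i) (ds ! Suc i) (Vs ! i) = c"
     "pq_norm 1 q (ds ! k) (ds ! Suc k) (Vs ! k) \<le> co"
     "F = (\<lambda>x. affine_apply (Vs ! k) (ds ! k) (hidden ds (take k Vs) x))"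
    using F unfolding relu_nets_def ds_def by auto
  have dsk: "ds ! Suc k = 1" unfolding ds_def using dh by (simp add: nth_append)
  have ds0: "ds ! 0 = m1" unfolding ds_def by simp
  have lt: "length (take k Vs) < length ds" using Vs by simp
  have cols: "\<forall>r<length (take k Vs). \<forall>col<ds ! Suc r. (\<Sum>l\<le>ds ! r. \<bar>((take k Vs) ! r) l col\<bar>) \<le> c"
  proof (intro allI impI)
    fix r col assume r: "r < length (take k Vs)" and col: "col < ds ! Suc r"
    have rk: "r < k" using r Vs by simp
    have "(\<Sum>l\<le>ds ! r. \<bar>(Vs ! r) l col\<bar>) \<le> pq_norm 1 q (ds ! r) (ds ! Suc r) (Vs ! r)"
      by (rule col_le_pq[OF q col])
    then show "(\<Sum>l\<le>ds ! r. \<bar>((take k Vs) ! r) l col\<bar>) \<le> c" using Vs(3) rk by simp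
  qed
  have inp: "\<forall>l<ds ! 0. (\<lambda>i. X i l) \<in> NN m1 c X 0" unfolding ds0 by auto
  have H: "\<forall>l<ds ! k. (\<lambda>i. hidden ds (take k Vs) (X i) l) \<in> NN m1 c X k"
  proof -
    have "\<forall>l<ds ! length (take k Vs). (\<lambda>i. hidden ds (take k Vs) (X i) l) \<in> NN m1 c X (0 + length (take k Vs))"
      using hidden_NN[where Vs = "take k Vs" and m = m1 and c = c and X = X] lt cols inp by blast
    then show ?thesis using Vs by simp
  qed
  have c0: "(\<Sum>t\<le>ds ! k. \<bar>(Vs ! k) t 0\<bar>) \<le> co"
    using col_le_pq[OF q, where j = 0 and b = "ds ! Suc k" and a = "ds ! k" and V = "Vs ! k"] Vs(4) dsk by simp
  show ?thesis
    unfolding Vs(5) affine_apply_def Lin_def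
    by (rule CollectI, rule exI[of _ "ds ! k"], rule exI[of _ "\<lambda>t. (Vs ! k) t 0"],
        rule exI[of _ "\<lambda>t i. hidden ds (take k Vs) (X i) t"]) (use c0 H in auto)
qed


definition lossc :: "(real \<Rightarrow> real \<Rightarrow> real) \<Rightarrow> ((nat \<Rightarrow> real) \<Rightarrow> (nat \<Rightarrow> real)) \<Rightarrow> (nat \<Rightarrow> real) \<times> real \<Rightarrow> real" where
  "lossc d F z = max 0 (min 1 (d (snd z) (F (fst z) 0)))"

lemma lossc_range: "0 \<le> lossc d F z" "lossc d F z \<le> 1"
  unfolding lossc_def by auto

lemma clip_lip: "\<bar>max 0 (min 1 a) - max 0 (min 1 b)\<bar> \<le> \<bar>a - (b::real)\<bar>"
  by (auto simp: abs_le_iff max_def min_def)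

lemma max1_pow_le: "c \<ge> 0 \<Longrightarrow> c ^ k \<le> a0 \<Longrightarrow> 1 \<le> a0 \<Longrightarrow> max 1 c ^ k \<le> (a0::real)"
  by (cases "c \<le> 1") (auto simp: max_def)

lemma rad_sample:
  fixes S :: "nat \<Rightarrow> (nat \<Rightarrow> real) \<times> real"
  assumes m1: "m1 \<ge> 1" and c: "c > 0" and co: "co > 0" and a0: "a0 \<ge> 1" "c ^ k \<le> a0"
    and q: "1 \<le> q" and dh: "length dh = k" and n: "n \<ge> 1"
    and S: "\<forall>i<n. S i \<in> cube m1 \<times> Y"
    and d_lip: "\<And>y u u'. y \<in> Y \<Longrightarrow> \<bar>d y u - d y u'\<bar> \<le> \<bar>u - u'\<bar>"
    and C: "C \<subseteq> relu_nets k (m1 # dh @ [1]) 1 q c co" "C \<noteq> {}"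
  shows "ravg n (\<lambda>e. Sup ((\<lambda>F. \<Sum>i<n. e i * lossc d F (S i)) ` C))
     \<le> 2 * (co * a0) * sqrt (real n) * sqrt (real k + 2 + ln (real m1 + 1))"
proof -
  define X where "X i = fst (S i)" for i
  define Ow where "Ow = Lin co (NN m1 c X k)"
  define T where "T = (\<lambda>F. (\<lambda>i. F (X i) 0)) ` C"
  define \<psi> where "\<psi> i t = max 0 (min 1 (d (snd (S i)) (t i)))" for i t
  have X: "\<forall>i<n. \<forall>l<m1. \<bar>X i l\<bar> \<le> 1" using S unfolding X_def cube_def by auto
  have TO: "T \<subseteq> Ow" unfolding T_def Ow_def using net_in_class[OF _ q dh] C by blast
  have neT: "T \<noteq> {}" unfolding T_def using C by auto
  define M where "M = co * max 1 (max 1 c ^ k)"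
  have bO: "bnd n Ow M" unfolding Ow_def M_def
    by (rule Lin_bnd[OF NN_bnd[OF X]]) (use c co in auto)
  have bT: "\<forall>t\<in>T. \<forall>i<n. \<bar>t i\<bar> \<le> M" using bO TO unfolding bnd_def by blast
  have M0: "M \<ge> 0" unfolding M_def using co by simp
  have b\<psi>: "\<forall>t\<in>T. \<forall>i<n. \<bar>\<psi> i t\<bar> \<le> max 1 M" unfolding \<psi>_def by auto
  have bT': "\<forall>t\<in>T. \<forall>i<n. \<bar>t i\<bar> \<le> max 1 M" using bT by fastforce
  have eq: "Sup ((\<lambda>F. \<Sum>i<n. e i * lossc d F (S i)) ` C) = Sup ((\<lambda>t. (\<Sum>i<n. e i * \<psi> i t) + 0) ` T)" for e
    unfolding T_def image_image \<psi>_def lossc_def X_def by simp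
  have "ravg n (\<lambda>e. Sup ((\<lambda>F. \<Sum>i<n. e i * lossc d F (S i)) ` C))
     = ravg n (\<lambda>e. (\<lambda>r. r) (Sup ((\<lambda>t. (\<Sum>i<n. e i * \<psi> i t) + 0) ` T)))" unfolding eq ..
  also have "\<dots> \<le> ravg n (\<lambda>e. (\<lambda>r. r) (Sup ((\<lambda>t. (\<Sum>i<n. e i * t i) + 0) ` T)))"
  proof (rule contraction[OF neT bT' b\<psi>, where K = 0])
    show "\<forall>t\<in>T. \<bar>0::real\<bar> \<le> 0" by simp
    show "\<forall>i<n. \<forall>(A::(nat\<Rightarrow>real)\<Rightarrow>real) (K::real). (\<forall>t\<in>T. \<bar>A t\<bar> \<le> K) \<longrightarrow>
       Sup ((\<lambda>t. A t + \<psi> i t) ` T) + Sup ((\<lambda>t. A t - \<psi> i t) ` T)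
       \<le> Sup ((\<lambda>t. A t + t i) ` T) + Sup ((\<lambda>t. A t - t i) ` T)"
    proof (intro allI impI)
      fix i :: nat and A :: "(nat\<Rightarrow>real)\<Rightarrow>real" and K :: real
      assume i: "i < n" and A: "\<forall>t\<in>T. \<bar>A t\<bar> \<le> K"
      have y: "snd (S i) \<in> Y" using S i by (auto simp: mem_Times_iff)
      show "Sup ((\<lambda>t. A t + \<psi> i t) ` T) + Sup ((\<lambda>t. A t - \<psi> i t) ` T)
       \<le> Sup ((\<lambda>t. A t + t i) ` T) + Sup ((\<lambda>t. A t - t i) ` T)"
      proof (rule twopoint_id[OF neT A])
        show "\<forall>t\<in>T. \<bar>t i\<bar> \<le> max 1 M" using bT' i by auto
        show "\<forall>t\<in>T. \<bar>\<psi> i t\<bar> \<le> max 1 M" using b\<psi> i by auto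
        show "\<forall>s\<in>T. \<forall>t\<in>T. \<psi> i s - \<psi> i t \<le> \<bar>s i - t i\<bar>"
        proof (intro ballI)
          fix s t
          have "\<psi> i s - \<psi> i t \<le> \<bar>\<psi> i s - \<psi> i t\<bar>" by simp
          also have "\<dots> \<le> \<bar>d (snd (S i)) (s i) - d (snd (S i)) (t i)\<bar>" unfolding \<psi>_def by (rule clip_lip)
          also have "\<dots> \<le> \<bar>s i - t i\<bar>" by (rule d_lip[OF y])
          finally show "\<psi> i s - \<psi> i t \<le> \<bar>s i - t i\<bar>" .
        qed
      qed
    qed
  qed
  also have "\<dots> \<le> ravg n (\<lambda>e. Sup ((\<lambda>g. \<Sum>i<n. e i * g i) ` Ow))"
  proof (rule ravg_mono)
    fix e assume e: "valid n e"
    show "(\<lambda>r. r) (Sup ((\<lambda>t. (\<Sum>i<n. e i * t i) + 0) ` T)) \<le> Sup ((\<lambda>g. \<Sum>i<n. e i * g i) ` Ow)"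
      using cSup_subset_mono[of "(\<lambda>g. \<Sum>i<n. e i * g i) ` T" "(\<lambda>g. \<Sum>i<n. e i * g i) ` Ow"]
        neT TO bnd_bdd[OF bO e] by auto
  qed
  also have "\<dots> \<le> 2 * (co * a0) * sqrt (real n) * sqrt (real k + 2 + ln (real m1 + 1))"
  proof (rule Rad_from_Pot)
    show "Pot n Ow \<mu> \<le> 2 ^ Suc k * (real m1 + real (Suc k)) * exp (real n * (\<mu> * (co * a0))\<^sup>2 / 2)"
      if "\<mu> \<ge> 0" for \<mu>
      unfolding Ow_def
      by (rule Pot_out[OF X m1 _ that]) (use c co max1_pow_le[of c k a0] a0 in auto)
    show "co * a0 > 0" using co a0 by simp
    show "real k + 2 + ln (real m1 + 1) > 0" by (simp add: add_pos_nonneg)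
    show "(0::real) < 2 ^ Suc k * (real m1 + real (Suc k))" by simp
    show "ln (2 ^ Suc k * (real m1 + real (Suc k))) \<le> 2 * (real k + 2 + ln (real m1 + 1))"
      by (rule lnL_bound)
  qed (use n in auto)
  finally show ?thesis .
qed


lemma (in prob_space) integrable_bnd:
  assumes "f \<in> borel_measurable M" "\<And>x. x \<in> space M \<Longrightarrow> \<bar>f x\<bar> \<le> (B::real)"
  shows "integrable M f"
proof (rule integrable_const_bound[where B = B])
  show "AE x in M. norm (f x) \<le> B" using assms(2) by (intro AE_I2) simp
qed (rule assms(1))

lemma (in prob_space) integral_le_const:
  assumes "integrable M f" "\<And>x. x \<in> space M \<Longrightarrow> f x \<le> (B::real)"
  shows "(\<integral>x. f x \<partial>M) \<le> B"
proof -
  have "(\<integral>x. f x \<partial>M) \<le> (\<integral>x. B \<partial>M)"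
    by (rule integral_mono[OF assms(1) integrable_const assms(2)])
  also have "\<dots> = B" by (simp add: prob_space)
  finally show ?thesis .
qed

lemma (in prob_space) integral_ge_const:
  assumes "integrable M f" "\<And>x. x \<in> space M \<Longrightarrow> (B::real) \<le> f x"
  shows "B \<le> (\<integral>x. f x \<partial>M)"
proof -
  have "(\<integral>x. B \<partial>M) \<le> (\<integral>x. f x \<partial>M)"
    by (rule integral_mono[OF integrable_const assms(1) assms(2)])
  moreover have "(\<integral>x. B \<partial>M) = B" by (simp add: prob_space)
  ultimately show ?thesis by linarith
qed

lemma (in prob_space) integral_abs_le_const:
  assumes "f \<in> borel_measurable M" "\<And>x. x \<in> space M \<Longrightarrow> \<bar>f x\<bar> \<le> (B::real)"
  shows "\<bar>\<integral>x. f x \<partial>M\<bar> \<le> B"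
proof -
  have i: "integrable M f" by (rule integrable_bnd[OF assms])
  have "(\<integral>x. f x \<partial>M) \<le> B" by (rule integral_le_const[OF i]) (use assms(2) in \<open>simp add: abs_le_iff\<close>)
  moreover have "-B \<le> (\<integral>x. f x \<partial>M)"
  proof (rule integral_ge_const[OF i])
    fix x assume "x \<in> space M"
    then have "\<bar>f x\<bar> \<le> B" by (rule assms(2))
    then show "-B \<le> f x" by linarith
  qed
  ultimately show ?thesis by simp
qed

lemma exp_bnd: "\<bar>a::real\<bar> \<le> B \<Longrightarrow> \<bar>exp (l * (a - c))\<bar> \<le> exp (\<bar>l\<bar> * (B + \<bar>c\<bar>))"
proof -
  assume a: "\<bar>a\<bar> \<le> B"
  have "\<bar>a - c\<bar> \<le> B + \<bar>c\<bar>" using a by (auto simp: abs_le_iff)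
  then have "\<bar>l\<bar> * \<bar>a - c\<bar> \<le> \<bar>l\<bar> * (B + \<bar>c\<bar>)" by (rule mult_left_mono) simp
  moreover have "l * (a - c) \<le> \<bar>l\<bar> * \<bar>a - c\<bar>" by (metis abs_ge_self abs_mult)
  ultimately show ?thesis by simp
qed

lemma (in prob_space) integrable_exp:
  assumes "f \<in> borel_measurable M" "\<And>x. x \<in> space M \<Longrightarrow> \<bar>f x\<bar> \<le> (B::real)"
  shows "integrable M (\<lambda>x. exp (l * (f x - c)))"
  by (rule integrable_bnd[where B = "exp (\<bar>l\<bar> * (B + \<bar>c\<bar>))"]) (use assms exp_bnd in auto)

lemma mcdiarmid_mgf:
  fixes M :: "'a measure" and l :: real
  assumes M: "prob_space M" and lam: "l > 0"
  shows "g \<in> borel_measurable (PiM {..<m} (\<lambda>_. M)) \<Longrightarrow> (\<forall>x\<in>space (PiM {..<m} (\<lambda>_. M)). \<bar>g x\<bar> \<le> B) \<Longrightarrow>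
    (\<forall>x\<in>space (PiM {..<m} (\<lambda>_. M)). \<forall>i<m. \<forall>y\<in>space M. \<bar>g x - g (x(i:=y))\<bar> \<le> \<delta>) \<Longrightarrow>
    (\<integral>x. exp (l * (g x - (\<integral>x. g x \<partial>PiM {..<m} (\<lambda>_. M)))) \<partial>PiM {..<m} (\<lambda>_. M)) \<le> exp (l\<^sup>2 * real m * \<delta>\<^sup>2 / 8)"
proof (induction m arbitrary: g)
  case 0
  show ?case by (simp add: PiM_empty lebesgue_integral_count_space_finite)
next
  case (Suc m)
  interpret M: prob_space M by fact
  interpret PS: product_sigma_finite "\<lambda>_. M"
    by (simp add: product_sigma_finite_def M.sigma_finite_measure_axioms)
  define N where "N = PiM {..<m} (\<lambda>_. M)"
  define N' where "N' = PiM (insert m {..<m}) (\<lambda>_. M)"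
  have N'eq: "PiM {..<Suc m} (\<lambda>_. M) = N'" unfolding N'_def by (simp add: lessThan_Suc)
  interpret N: prob_space N unfolding N_def by (rule prob_space_PiM) (rule M)
  interpret N': prob_space N' unfolding N'_def by (rule prob_space_PiM) (rule M)
  have gm[measurable]: "g \<in> borel_measurable N'" using Suc.prems(1) N'eq by simp
  have gB: "\<And>x. x \<in> space N' \<Longrightarrow> \<bar>g x\<bar> \<le> B" using Suc.prems(2) N'eq by simp
  have gD: "\<And>x i y. x \<in> space N' \<Longrightarrow> i < Suc m \<Longrightarrow> y \<in> space M \<Longrightarrow> \<bar>g x - g (x(i:=y))\<bar> \<le> \<delta>"
    using Suc.prems(3) unfolding N'eq by blast
  have upd: "x(m := y) \<in> space N'" if "x \<in> space N" "y \<in> space M" for x y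
    using that unfolding N_def N'_def by (auto simp: space_PiM PiE_iff extensional_def)
  have gxy[measurable]: "(\<lambda>(x, y). g (x(m := y))) \<in> borel_measurable (N \<Otimes>\<^sub>M M)"
  proof -
    have "(\<lambda>(f, y). f(m := y)) \<in> measurable (N \<Otimes>\<^sub>M M) N'"
      unfolding N_def N'_def by (rule measurable_add_dim)
    from measurable_comp[OF this gm] show ?thesis by (simp add: comp_def case_prod_beta)
  qed
  have gy[measurable]: "(\<lambda>y. g (x(m := y))) \<in> borel_measurable M" if "x \<in> space N" for x
  proof -
    have "(\<lambda>y. x(m := y)) \<in> measurable M N'"
      unfolding N'_def using measurable_component_update[of x "{..<m}" "\<lambda>_. M" m] that
      unfolding N_def by simp
    from measurable_comp[OF this gm] show ?thesis by (simp add: comp_def)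
  qed
  define h where "h x = (\<integral>y. g (x(m := y)) \<partial>M)" for x
  have hm[measurable]: "h \<in> borel_measurable N"
    unfolding h_def using M.borel_measurable_lebesgue_integral[of "\<lambda>x y. g (x(m := y))" N] gxy by simp
  have hB: "\<bar>h x\<bar> \<le> B" if "x \<in> space N" for x
    unfolding h_def by (rule M.integral_abs_le_const) (use that gy gB upd in auto)
  have hD: "\<bar>h x - h (x(i:=y))\<bar> \<le> \<delta>" if x: "x \<in> space N" and i: "i < m" and y: "y \<in> space M" for x i y
  proof -
    have xi: "x(i:=y) \<in> space N" using x y i unfolding N_def by (auto simp: space_PiM PiE_iff extensional_def)
    have i1: "integrable M (\<lambda>y'. g (x(m := y')))"
      by (rule M.integrable_bnd[OF gy[OF x]]) (use gB upd x in auto)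
    have i2: "integrable M (\<lambda>y'. g ((x(i:=y))(m := y')))"
      by (rule M.integrable_bnd[OF gy[OF xi]]) (use gB upd xi in auto)
    have eq: "(\<lambda>y'. g ((x(i:=y))(m := y'))) = (\<lambda>y'. g ((x(m:=y'))(i:=y)))"
      by (rule ext) (use i in \<open>simp add: fun_upd_twist\<close>)
    have "h x - h (x(i:=y)) = (\<integral>y'. g (x(m := y')) - g ((x(i:=y))(m := y')) \<partial>M)"
      unfolding h_def by (rule Bochner_Integration.integral_diff[OF i1 i2, symmetric])
    also have "\<dots> = (\<integral>y'. g (x(m := y')) - g ((x(m:=y'))(i:=y)) \<partial>M)"
      using fun_cong[OF eq] by simp
    also have "\<bar>\<dots>\<bar> \<le> \<delta>"
    proof (rule M.integral_abs_le_const)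
      show "(\<lambda>y'. g (x(m := y')) - g ((x(m:=y'))(i:=y))) \<in> borel_measurable M"
        using gy[OF x] gy[OF xi] i by (simp add: fun_upd_twist)
      fix y' assume "y' \<in> space M"
      then show "\<bar>g (x(m := y')) - g ((x(m:=y'))(i:=y))\<bar> \<le> \<delta>" using gD upd x y i by auto
    qed
    finally show ?thesis .
  qed
  have gint: "integrable N' g" by (rule N'.integrable_bnd[OF gm gB])
  have Eg: "(\<integral>x. g x \<partial>N') = (\<integral>x. h x \<partial>N)"
    unfolding N'_def N_def h_def by (rule PS.product_integral_insert) (use gint N'_def in auto)
  define Eh where "Eh = (\<integral>x. h x \<partial>N)"
  have inner: "(\<integral>y. exp (l * (g (x(m:=y)) - Eh)) \<partial>M) \<le> exp (l * (h x - Eh)) * exp (l\<^sup>2 * \<delta>\<^sup>2 / 8)"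
    if x: "x \<in> space N" for x
  proof -
    define f where "f y = g (x(m:=y))" for y
    have fm[measurable]: "f \<in> borel_measurable M" unfolding f_def using gy[OF x] .
    have fB: "\<bar>f y\<bar> \<le> B" if "y \<in> space M" for y unfolding f_def using gB upd x that by auto
    define a where "a = (INF y\<in>space M. f y)"
    define b where "b = (SUP y\<in>space M. f y)"
    have ne: "space M \<noteq> {}" using M.not_empty .
    have bdd1: "bdd_below (f ` space M)" by (rule bdd_belowI[of _ "-B"]) (use fB in force)
    have bdd2: "bdd_above (f ` space M)" by (rule bdd_aboveI[of _ B]) (use fB in force)
    have fa: "a \<le> f y" "f y \<le> b" if "y \<in> space M" for y
      unfolding a_def b_def using that bdd1 bdd2 by (auto intro: cINF_lower cSUP_upper)
    have ba: "b - a \<le> \<delta>"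
    proof -
      have "f y \<le> f y' + \<delta>" if "y \<in> space M" "y' \<in> space M" for y y'
      proof -
        have "\<bar>g (x(m:=y')) - g ((x(m:=y'))(m:=y))\<bar> \<le> \<delta>" using gD[of "x(m:=y')" m y] upd x that by auto
        then show ?thesis unfolding f_def by simp
      qed
      then have bb: "b \<le> f y' + \<delta>" if "y' \<in> space M" for y'
        unfolding b_def using ne that by (auto intro!: cSUP_least)
      have "b - \<delta> \<le> a" unfolding a_def
      proof (rule cINF_greatest[OF ne])
        fix y assume "y \<in> space M"
        then show "b - \<delta> \<le> f y" using bb by force
      qed
      then show ?thesis by simp
    qed
    have ab: "a \<le> b" using fa ne by fastforce
    interpret I: interval_bounded_random_variable M f a b
      by unfold_locales (auto intro!: AE_I2 fa)
    have hx: "h x = (\<integral>y. f y \<partial>M)" unfolding h_def f_def ..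
    have iexp: "integrable M (\<lambda>y. exp (l * (f y - h x)))" by (rule M.integrable_exp[OF fm fB])
    have "ennreal (\<integral>y. exp (l * (f y - h x)) \<partial>M) = (\<integral>\<^sup>+ y. ennreal (exp (l * (f y - h x))) \<partial>M)"
      by (rule nn_integral_eq_integral[symmetric]) (use iexp in auto)
    also have "\<dots> \<le> ennreal (exp (l\<^sup>2 * (b - a)\<^sup>2 / 8))"
      using I.Hoeffdings_lemma_nn_integral[OF lam] unfolding hx by simp
    finally have "(\<integral>y. exp (l * (f y - h x)) \<partial>M) \<le> exp (l\<^sup>2 * (b - a)\<^sup>2 / 8)"
      by (simp add: ennreal_le_iff)
    also have "\<dots> \<le> exp (l\<^sup>2 * \<delta>\<^sup>2 / 8)"
      using ba ab by (intro exp_mono divide_right_mono mult_left_mono power_mono) auto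
    finally have H: "(\<integral>y. exp (l * (f y - h x)) \<partial>M) \<le> exp (l\<^sup>2 * \<delta>\<^sup>2 / 8)" .
    have "(\<integral>y. exp (l * (g (x(m:=y)) - Eh)) \<partial>M) = (\<integral>y. exp (l * (h x - Eh)) * exp (l * (f y - h x)) \<partial>M)"
      unfolding f_def by (rule Bochner_Integration.integral_cong) (auto simp: exp_add[symmetric] algebra_simps)
    also have "\<dots> = exp (l * (h x - Eh)) * (\<integral>y. exp (l * (f y - h x)) \<partial>M)" by simp
    also have "\<dots> \<le> exp (l * (h x - Eh)) * exp (l\<^sup>2 * \<delta>\<^sup>2 / 8)" using H by (intro mult_left_mono) auto
    finally show ?thesis .
  qed
  have hint: "integrable N (\<lambda>x. exp (l * (h x - Eh)))" by (rule N.integrable_exp[OF hm hB])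
  have eint: "integrable N' (\<lambda>x. exp (l * (g x - Eh)))" by (rule N'.integrable_exp[OF gm gB])
  have iint: "integrable N (\<lambda>x. \<integral>y. exp (l * (g (x(m:=y)) - Eh)) \<partial>M)"
  proof (rule N.integrable_bnd[where B = "exp (\<bar>l\<bar> * (B + \<bar>Eh\<bar>))"])
    show "(\<lambda>x. \<integral>y. exp (l * (g (x(m:=y)) - Eh)) \<partial>M) \<in> borel_measurable N"
      using M.borel_measurable_lebesgue_integral[of "\<lambda>x y. exp (l * (g (x(m := y)) - Eh))" N] gxy
      by (simp add: case_prod_beta)
    fix x assume x: "x \<in> space N"
    show "\<bar>\<integral>y. exp (l * (g (x(m:=y)) - Eh)) \<partial>M\<bar> \<le> exp (\<bar>l\<bar> * (B + \<bar>Eh\<bar>))"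
    proof (rule M.integral_abs_le_const)
      show "(\<lambda>y. exp (l * (g (x(m:=y)) - Eh))) \<in> borel_measurable M" using gy[OF x] by simp
      fix y assume "y \<in> space M"
      then have "\<bar>g (x(m:=y))\<bar> \<le> B" using gB upd x by auto
      then show "\<bar>exp (l * (g (x(m:=y)) - Eh))\<bar> \<le> exp (\<bar>l\<bar> * (B + \<bar>Eh\<bar>))" by (rule exp_bnd)
    qed
  qed
  have "(\<integral>x. exp (l * (g x - (\<integral>x. g x \<partial>PiM {..<Suc m} (\<lambda>_. M)))) \<partial>PiM {..<Suc m} (\<lambda>_. M))
      = (\<integral>x. exp (l * (g x - Eh)) \<partial>N')"
    unfolding N'eq Eg Eh_def ..
  also have "\<dots> = (\<integral>x. (\<integral>y. exp (l * (g (x(m:=y)) - Eh)) \<partial>M) \<partial>N)"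
    unfolding N'_def N_def by (rule PS.product_integral_insert) (use eint N'_def in auto)
  also have "\<dots> \<le> (\<integral>x. exp (l * (h x - Eh)) * exp (l\<^sup>2 * \<delta>\<^sup>2 / 8) \<partial>N)"
    by (rule integral_mono[OF iint _ inner]) (use hint in auto)
  also have "\<dots> = (\<integral>x. exp (l * (h x - Eh)) \<partial>N) * exp (l\<^sup>2 * \<delta>\<^sup>2 / 8)" by simp
  also have "\<dots> \<le> exp (l\<^sup>2 * real m * \<delta>\<^sup>2 / 8) * exp (l\<^sup>2 * \<delta>\<^sup>2 / 8)"
  proof (rule mult_right_mono)
    show "(\<integral>x. exp (l * (h x - Eh)) \<partial>N) \<le> exp (l\<^sup>2 * real m * \<delta>\<^sup>2 / 8)"
    proof -
      have hB': "\<forall>x\<in>space (PiM {..<m} (\<lambda>_. M)). \<bar>h x\<bar> \<le> B" using hB unfolding N_def by blast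
      have hD': "\<forall>x\<in>space (PiM {..<m} (\<lambda>_. M)). \<forall>i<m. \<forall>y\<in>space M. \<bar>h x - h (x(i:=y))\<bar> \<le> \<delta>"
        using hD unfolding N_def by blast
      have hm': "h \<in> borel_measurable (PiM {..<m} (\<lambda>_. M))" using hm unfolding N_def .
      show ?thesis using Suc.IH[OF hm' hB' hD'] unfolding Eh_def N_def .
    qed
  qed simp
  also have "\<dots> = exp (l\<^sup>2 * real (Suc m) * \<delta>\<^sup>2 / 8)" by (simp add: exp_add[symmetric] algebra_simps)
  finally show ?case .
qed

lemma mcdiarmid_tail:
  fixes M :: "'a measure" and g :: "(nat \<Rightarrow> 'a) \<Rightarrow> real"
  assumes M: "prob_space M" and gm: "g \<in> borel_measurable (PiM {..<m} (\<lambda>_. M))"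
    and gB: "\<forall>x\<in>space (PiM {..<m} (\<lambda>_. M)). \<bar>g x\<bar> \<le> B"
    and gD: "\<forall>x\<in>space (PiM {..<m} (\<lambda>_. M)). \<forall>i<m. \<forall>y\<in>space M. \<bar>g x - g (x(i:=y))\<bar> \<le> \<delta>"
    and s: "s > 0" and d: "\<delta> > 0" and m: "m \<ge> 1"
  shows "measure (PiM {..<m} (\<lambda>_. M)) {x \<in> space (PiM {..<m} (\<lambda>_. M)). g x - (\<integral>x. g x \<partial>PiM {..<m} (\<lambda>_. M)) \<ge> s}
     \<le> exp (- 2 * s\<^sup>2 / (real m * \<delta>\<^sup>2))"
proof -
  define N where "N = PiM {..<m} (\<lambda>_. M)"
  interpret N: prob_space N unfolding N_def by (rule prob_space_PiM) (rule M)
  define Eg where "Eg = (\<integral>x. g x \<partial>N)"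
  define l where "l = 4 * s / (real m * \<delta>\<^sup>2)"
  have l: "l > 0" unfolding l_def using s d m by simp
  have gB': "\<And>x. x \<in> space N \<Longrightarrow> \<bar>g x\<bar> \<le> B" using gB unfolding N_def by blast
  have gm': "g \<in> borel_measurable N" using gm unfolding N_def .
  have int: "integrable N (\<lambda>x. exp (l * (g x - Eg)))" by (rule N.integrable_exp[OF gm' gB'])
  have "{x \<in> space N. g x - Eg \<ge> s} = {x \<in> space N. exp (l * (g x - Eg)) \<ge> exp (l * s)}"
    using l by auto
  then have "measure N {x \<in> space N. g x - Eg \<ge> s} \<le> (\<integral>x. exp (l * (g x - Eg)) \<partial>N) / exp (l * s)"
    using integral_Markov_inequality_measure[OF int, of "space N" "exp (l * s)"] by simp
  also have "\<dots> \<le> exp (l\<^sup>2 * real m * \<delta>\<^sup>2 / 8) / exp (l * s)"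
    using mcdiarmid_mgf[OF M l gm gB gD] unfolding Eg_def N_def by (intro divide_right_mono) auto
  also have "\<dots> = exp (l\<^sup>2 * real m * \<delta>\<^sup>2 / 8 - l * s)" by (simp add: exp_diff)
  also have "l\<^sup>2 * real m * \<delta>\<^sup>2 / 8 - l * s = - 2 * s\<^sup>2 / (real m * \<delta>\<^sup>2)"
    unfolding l_def using d m by (simp add: field_simps power2_eq_square)
  finally show ?thesis unfolding N_def Eg_def .
qed


lemma ravg_measurable:
  "(\<And>e. (\<lambda>w. f e w) \<in> borel_measurable M) \<Longrightarrow> (\<lambda>w. ravg n (\<lambda>e. f e w)) \<in> borel_measurable M"
proof (induction n arbitrary: f)
  case 0 then show ?case by simp
next
  case (Suc n)
  have "(\<lambda>w. ravg n (\<lambda>e. f (e(n:=1)) w)) \<in> borel_measurable M" by (rule Suc.IH) (rule Suc.prems)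
  moreover have "(\<lambda>w. ravg n (\<lambda>e. f (e(n:=-1)) w)) \<in> borel_measurable M" by (rule Suc.IH) (rule Suc.prems)
  ultimately show ?case by simp
qed

lemma ravg_integral:
  fixes M :: "'a measure"
  shows "(\<And>e. integrable M (\<lambda>w. f e w)) \<Longrightarrow> integrable M (\<lambda>w. ravg n (\<lambda>e. f e w)) \<and>
     (\<integral>w. ravg n (\<lambda>e. f e w) \<partial>M) = ravg n (\<lambda>e. \<integral>w. f e w \<partial>M)"
proof (induction n arbitrary: f)
  case 0 then show ?case by simp
next
  case (Suc n)
  have A: "integrable M (\<lambda>w. ravg n (\<lambda>e. f (e(n:=1)) w)) \<and>
     (\<integral>w. ravg n (\<lambda>e. f (e(n:=1)) w) \<partial>M) = ravg n (\<lambda>e. \<integral>w. f (e(n:=1)) w \<partial>M)"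
    by (rule Suc.IH) (rule Suc.prems)
  have B: "integrable M (\<lambda>w. ravg n (\<lambda>e. f (e(n:=-1)) w)) \<and>
     (\<integral>w. ravg n (\<lambda>e. f (e(n:=-1)) w) \<partial>M) = ravg n (\<lambda>e. \<integral>w. f (e(n:=-1)) w \<partial>M)"
    by (rule Suc.IH) (rule Suc.prems)
  show ?case using A B by simp
qed

lemma sup_bounds:
  fixes f :: "'c \<Rightarrow> real"
  assumes "C \<noteq> {}" "\<And>\<theta>. \<theta> \<in> C \<Longrightarrow> a \<le> f \<theta> \<and> f \<theta> \<le> b"
  shows "a \<le> Sup (f ` C) \<and> Sup (f ` C) \<le> b"
proof
  obtain \<theta> where t: "\<theta> \<in> C" using assms by auto
  have bdd: "bdd_above (f ` C)" using assms(2) by (intro bdd_aboveI[of _ b]) auto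
  have "a \<le> f \<theta>" using assms(2) t by auto
  also have "\<dots> \<le> Sup (f ` C)" by (rule cSUP_upper[OF t bdd])
  finally show "a \<le> Sup (f ` C)" .
  show "Sup (f ` C) \<le> b" using assms by (intro cSUP_least) auto
qed

lemma sup_diff_le:
  fixes f g :: "'c \<Rightarrow> real"
  assumes "C \<noteq> {}" "\<And>\<theta>. \<theta> \<in> C \<Longrightarrow> \<bar>f \<theta> - g \<theta>\<bar> \<le> \<epsilon>" "bdd_above (f ` C)" "bdd_above (g ` C)"
  shows "\<bar>Sup (f ` C) - Sup (g ` C)\<bar> \<le> \<epsilon>"
proof -
  have "Sup (f ` C) \<le> Sup (g ` C) + \<epsilon>"
  proof (rule cSUP_least[OF assms(1)])
    fix \<theta> assume t: "\<theta> \<in> C"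
    have "f \<theta> \<le> g \<theta> + \<epsilon>" using assms(2)[OF t] by (simp add: abs_le_iff)
    also have "g \<theta> \<le> Sup (g ` C)" by (rule cSUP_upper[OF t assms(4)])
    finally show "f \<theta> \<le> Sup (g ` C) + \<epsilon>" by simp
  qed
  moreover have "Sup (g ` C) \<le> Sup (f ` C) + \<epsilon>"
  proof (rule cSUP_least[OF assms(1)])
    fix \<theta> assume t: "\<theta> \<in> C"
    have "g \<theta> \<le> f \<theta> + \<epsilon>" using assms(2)[OF t] by (simp add: abs_le_iff)
    also have "f \<theta> \<le> Sup (f ` C)" by (rule cSUP_upper[OF t assms(3)])
    finally show "g \<theta> \<le> Sup (f ` C) + \<epsilon>" by simp
  qed
  ultimately show ?thesis by (simp add: abs_le_iff)
qed

lemma sum_e_bound: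
  fixes e :: "nat \<Rightarrow> real"
  assumes "\<And>i. i < n \<Longrightarrow> \<bar>a i\<bar> \<le> 1"
  shows "\<bar>\<Sum>i<n. e i * a i\<bar> \<le> (\<Sum>i<n. \<bar>e i\<bar>)"
proof -
  have "\<bar>\<Sum>i<n. e i * a i\<bar> \<le> (\<Sum>i<n. \<bar>e i * a i\<bar>)" by (rule sum_abs)
  also have "\<dots> \<le> (\<Sum>i<n. \<bar>e i\<bar>)"
    by (rule sum_mono) (use assms in \<open>auto simp: abs_mult intro: mult_left_le\<close>)
  finally show ?thesis .
qed

locale symm_setup =
  fixes D :: "'z measure" and C :: "'c set" and lf :: "'c \<Rightarrow> 'z \<Rightarrow> real" and n :: nat
  assumes D: "prob_space D" and C: "countable C" "C \<noteq> {}"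
    and lm: "\<And>\<theta>. \<theta> \<in> C \<Longrightarrow> lf \<theta> \<in> borel_measurable D"
    and l0: "\<And>\<theta> z. 0 \<le> lf \<theta> z" and l1: "\<And>\<theta> z. lf \<theta> z \<le> 1" and n: "n \<ge> 1"
begin

interpretation D: prob_space D by (rule D)

definition "E \<theta> = (\<integral>z. lf \<theta> z \<partial>D)"
definition "Z x = Sup ((\<lambda>\<theta>. E \<theta> - (1 / real n) * (\<Sum>i<n. lf \<theta> (x i))) ` C)"
definition "Rad x = ravg n (\<lambda>e. Sup ((\<lambda>\<theta>. \<Sum>i<n. e i * lf \<theta> (x i)) ` C))"

lemma labs: "\<bar>lf \<theta> z\<bar> \<le> 1" by (metis abs_of_nonneg l0 l1)

lemma E_bounds: "0 \<le> E \<theta>" "E \<theta> \<le> 1"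
proof -
  show "0 \<le> E \<theta>" unfolding E_def by (rule integral_nonneg_AE) (simp add: l0)
  show "E \<theta> \<le> 1"
  proof (cases "integrable D (lf \<theta>)")
    case True then show ?thesis unfolding E_def by (rule D.integral_le_const) (simp add: l1)
  next
    case False then show ?thesis unfolding E_def by (simp add: not_integrable_integral_eq)
  qed
qed

lemma comp_meas: "\<theta> \<in> C \<Longrightarrow> j \<in> K \<Longrightarrow> (\<lambda>w. lf \<theta> (w j)) \<in> borel_measurable (PiM K (\<lambda>_. D))"
  using measurable_comp[OF measurable_component_singleton[of j K "\<lambda>_. D"] lm[of \<theta>]] by (simp add: comp_def)

lemma avg_bounds: "0 \<le> (1 / real n) * (\<Sum>i<n. lf \<theta> (x i))" "(1 / real n) * (\<Sum>i<n. lf \<theta> (x i)) \<le> 1"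
proof -
  show "0 \<le> (1 / real n) * (\<Sum>i<n. lf \<theta> (x i))" by (simp add: sum_nonneg l0)
  have "(\<Sum>i<n. lf \<theta> (x i)) \<le> (\<Sum>i<n. 1)" by (rule sum_mono) (simp add: l1)
  then show "(1 / real n) * (\<Sum>i<n. lf \<theta> (x i)) \<le> 1" using n by (simp add: field_simps)
qed

lemma Z_bounds: "\<bar>Z x\<bar> \<le> 1"
proof -
  have "-1 \<le> Z x \<and> Z x \<le> 1" unfolding Z_def
  proof (rule sup_bounds[OF C(2)])
    fix \<theta> assume "\<theta> \<in> C"
    show "- 1 \<le> E \<theta> - 1 / real n * (\<Sum>i<n. lf \<theta> (x i)) \<and> E \<theta> - 1 / real n * (\<Sum>i<n. lf \<theta> (x i)) \<le> 1"
      using E_bounds[of \<theta>] avg_bounds[of \<theta> x] by linarith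
  qed
  then show ?thesis by (simp add: abs_le_iff)
qed

lemma Z_meas: "Z \<in> borel_measurable (PiM {..<n} (\<lambda>_. D))"
  unfolding Z_def
proof (rule borel_measurable_cSUP[OF C(1)])
  fix \<theta> assume t: "\<theta> \<in> C"
  show "(\<lambda>x. E \<theta> - 1 / real n * (\<Sum>i<n. lf \<theta> (x i))) \<in> borel_measurable (PiM {..<n} (\<lambda>_. D))"
  proof -
    have "(\<lambda>x. lf \<theta> (x i)) \<in> borel_measurable (PiM {..<n} (\<lambda>_. D))" if "i < n" for i
      by (rule comp_meas[OF t]) (use that in simp)
    then show ?thesis by (intro borel_measurable_diff borel_measurable_times borel_measurable_sum) auto
  qed
next
  fix x
  show "bdd_above ((\<lambda>\<theta>. E \<theta> - 1 / real n * (\<Sum>i<n. lf \<theta> (x i))) ` C)"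
  proof (rule bdd_aboveI[of _ 1])
    fix y assume "y \<in> (\<lambda>\<theta>. E \<theta> - 1 / real n * (\<Sum>i<n. lf \<theta> (x i))) ` C"
    then obtain \<theta> where "y = E \<theta> - 1 / real n * (\<Sum>i<n. lf \<theta> (x i))" by auto
    then show "y \<le> 1" using E_bounds[of \<theta>] avg_bounds[of \<theta> x] by linarith
  qed
qed

lemma sup_sum_meas:
  fixes a :: "'c \<Rightarrow> nat \<Rightarrow> 'w \<Rightarrow> real" and e :: "nat \<Rightarrow> real"
  assumes "\<And>\<theta> i. \<theta> \<in> C \<Longrightarrow> i < n \<Longrightarrow> (\<lambda>w. a \<theta> i w) \<in> borel_measurable M"
    and "\<And>\<theta> i w. \<bar>a \<theta> i w\<bar> \<le> 1"
  shows "(\<lambda>w. Sup ((\<lambda>\<theta>. \<Sum>i<n. e i * a \<theta> i w) ` C)) \<in> borel_measurable M"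
proof (rule borel_measurable_cSUP[OF C(1)])
  fix \<theta> assume "\<theta> \<in> C"
  then show "(\<lambda>w. \<Sum>i<n. e i * a \<theta> i w) \<in> borel_measurable M" using assms(1) by auto
next
  fix w
  show "bdd_above ((\<lambda>\<theta>. \<Sum>i<n. e i * a \<theta> i w) ` C)"
    by (rule bdd_aboveI[of _ "\<Sum>i<n. \<bar>e i\<bar>"]) (use sum_e_bound[of n "\<lambda>i. a _ i w"] assms(2) in \<open>force simp: abs_le_iff\<close>)
qed

lemma bdd_sumC:
  fixes a :: "'c \<Rightarrow> nat \<Rightarrow> real" and e :: "nat \<Rightarrow> real"
  assumes "\<And>\<theta> i. \<bar>a \<theta> i\<bar> \<le> 1"
  shows "bdd_above ((\<lambda>\<theta>. \<Sum>i<n. e i * a \<theta> i) ` C)"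
proof (rule bdd_aboveI[of _ "\<Sum>i<n. \<bar>e i\<bar>"])
  fix x assume "x \<in> (\<lambda>\<theta>. \<Sum>i<n. e i * a \<theta> i) ` C"
  then obtain \<theta> where x: "x = (\<Sum>i<n. e i * a \<theta> i)" by auto
  have "\<bar>\<Sum>i<n. e i * a \<theta> i\<bar> \<le> (\<Sum>i<n. \<bar>e i\<bar>)" by (rule sum_e_bound) (rule assms)
  then show "x \<le> (\<Sum>i<n. \<bar>e i\<bar>)" unfolding x by simp
qed

lemma sup_sum_bound:
  fixes a :: "'c \<Rightarrow> nat \<Rightarrow> real" and e :: "nat \<Rightarrow> real"
  assumes "\<And>\<theta> i. \<bar>a \<theta> i\<bar> \<le> 1"
  shows "\<bar>Sup ((\<lambda>\<theta>. \<Sum>i<n. e i * a \<theta> i) ` C)\<bar> \<le> (\<Sum>i<n. \<bar>e i\<bar>)"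
proof -
  have "- (\<Sum>i<n. \<bar>e i\<bar>) \<le> Sup ((\<lambda>\<theta>. \<Sum>i<n. e i * a \<theta> i) ` C) \<and> Sup ((\<lambda>\<theta>. \<Sum>i<n. e i * a \<theta> i) ` C) \<le> (\<Sum>i<n. \<bar>e i\<bar>)"
  proof (rule sup_bounds[OF C(2)])
    fix \<theta> assume "\<theta> \<in> C"
    have "\<bar>\<Sum>i<n. e i * a \<theta> i\<bar> \<le> (\<Sum>i<n. \<bar>e i\<bar>)" by (rule sum_e_bound) (rule assms)
    then show "- (\<Sum>i<n. \<bar>e i\<bar>) \<le> (\<Sum>i<n. e i * a \<theta> i) \<and> (\<Sum>i<n. e i * a \<theta> i) \<le> (\<Sum>i<n. \<bar>e i\<bar>)"
      by (simp add: abs_le_iff)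
  qed
  then show ?thesis by (simp add: abs_le_iff)
qed

lemma Rad_meas: "(\<forall>i<n. j i \<in> K) \<Longrightarrow> (\<lambda>w. Rad (\<lambda>i. w (j i))) \<in> borel_measurable (PiM K (\<lambda>_. D))"
  unfolding Rad_def
  by (rule ravg_measurable, rule sup_sum_meas) (auto intro: comp_meas labs)

lemma Rad_bound: "\<bar>Rad x\<bar> \<le> real n"
proof -
  have "\<bar>Rad x\<bar> \<le> ravg n (\<lambda>e. real n)"
  proof -
    have "Rad x \<le> ravg n (\<lambda>e. real n)" unfolding Rad_def
    proof (rule ravg_mono)
      fix e assume e: "valid n e"
      have "\<bar>Sup ((\<lambda>\<theta>. \<Sum>i<n. e i * lf \<theta> (x i)) ` C)\<bar> \<le> (\<Sum>i<n. \<bar>e i\<bar>)" by (rule sup_sum_bound) (rule labs)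
      also have "\<dots> = real n" using e valid_abs[OF e] by simp
      finally show "Sup ((\<lambda>\<theta>. \<Sum>i<n. e i * lf \<theta> (x i)) ` C) \<le> real n" by simp
    qed
    moreover have "- Rad x \<le> ravg n (\<lambda>e. real n)"
    proof -
      have "ravg n (\<lambda>e. - real n) \<le> Rad x" unfolding Rad_def
      proof (rule ravg_mono)
        fix e assume e: "valid n e"
        have "\<bar>Sup ((\<lambda>\<theta>. \<Sum>i<n. e i * lf \<theta> (x i)) ` C)\<bar> \<le> (\<Sum>i<n. \<bar>e i\<bar>)" by (rule sup_sum_bound) (rule labs)
        also have "\<dots> = real n" using e valid_abs[OF e] by simp
        finally show "- real n \<le> Sup ((\<lambda>\<theta>. \<Sum>i<n. e i * lf \<theta> (x i)) ` C)" by simp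
      qed
      then show ?thesis by simp
    qed
    ultimately show ?thesis by simp
  qed
  then show ?thesis by simp
qed


lemma Rad_cong: "(\<And>i. i < n \<Longrightarrow> x i = x' i) \<Longrightarrow> Rad x = Rad x'"
  unfolding Rad_def by (intro ravg_cong arg_cong[where f = Sup] image_cong refl sum.cong) auto

definition "Psi e w = Sup ((\<lambda>\<theta>. \<Sum>i<n. (e i / real n) * (lf \<theta> (w (n + i)) - lf \<theta> (w i))) ` C)"

lemma dabs: "\<bar>lf \<theta> a - lf \<theta> b\<bar> \<le> 1" using l0[of \<theta> a] l1[of \<theta> a] l0[of \<theta> b] l1[of \<theta> b] by (simp add: abs_le_iff)

lemma Psi_meas: "(\<lambda>w. Psi e w) \<in> borel_measurable (PiM {..<2*n} (\<lambda>_. D))"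
  unfolding Psi_def
proof (rule sup_sum_meas[where e = "\<lambda>i. e i / real n"])
  fix \<theta> i assume t: "\<theta> \<in> C" and i: "i < n"
  have "(\<lambda>w. lf \<theta> (w (n + i))) \<in> borel_measurable (PiM {..<2*n} (\<lambda>_. D))" by (rule comp_meas[OF t]) (use i in simp)
  moreover have "(\<lambda>w. lf \<theta> (w i)) \<in> borel_measurable (PiM {..<2*n} (\<lambda>_. D))" by (rule comp_meas[OF t]) (use i in simp)
  ultimately show "(\<lambda>w. lf \<theta> (w (n + i)) - lf \<theta> (w i)) \<in> borel_measurable (PiM {..<2*n} (\<lambda>_. D))" by simp
qed (rule dabs)

lemma Psi_bound: "\<bar>Psi e w\<bar> \<le> (\<Sum>i<n. \<bar>e i / real n\<bar>)"
  unfolding Psi_def by (rule sup_sum_bound) (rule dabs)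

lemma comp_int: "\<theta> \<in> C \<Longrightarrow> j \<in> K \<Longrightarrow> (\<integral>w. lf \<theta> (w j) \<partial>PiM K (\<lambda>_. D)) = E \<theta>"
proof -
  assume t: "\<theta> \<in> C" and j: "j \<in> K"
  have "E \<theta> = (\<integral>z. lf \<theta> z \<partial>distr (PiM K (\<lambda>_. D)) D (\<lambda>w. w j))"
    unfolding E_def using distr_PiM_component[of K "\<lambda>_. D" j] D j by simp
  also have "\<dots> = (\<integral>w. lf \<theta> (w j) \<partial>PiM K (\<lambda>_. D))"
    by (rule integral_distr[OF measurable_component_singleton[OF j] lm[OF t]])
  finally show ?thesis ..
qed

lemma symmetrization: "(\<integral>x. Z x \<partial>PiM {..<n} (\<lambda>_. D)) \<le> (2 / real n) * (\<integral>x. Rad x \<partial>PiM {..<n} (\<lambda>_. D))"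
proof -
  interpret PS: product_sigma_finite "\<lambda>_. D"
    by (simp add: product_sigma_finite_def D.sigma_finite_measure_axioms)
  define I where "I = {..<n}"
  define J where "J = {n..<2*n}"
  define K where "K = {..<2*n}"
  define P where "P = PiM I (\<lambda>_. D)"
  define PJ where "PJ = PiM J (\<lambda>_. D)"
  define W where "W = PiM K (\<lambda>_. D)"
  have IJ: "I \<inter> J = {}" "finite I" "finite J" "I \<union> J = K" unfolding I_def J_def K_def by auto
  interpret P: prob_space P unfolding P_def by (rule prob_space_PiM) (rule D)
  interpret PJ: prob_space PJ unfolding PJ_def by (rule prob_space_PiM) (rule D)
  interpret W: prob_space W unfolding W_def by (rule prob_space_PiM) (rule D)
  have Wm: "(\<lambda>w. Psi e w) \<in> borel_measurable W" for e unfolding W_def K_def by (rule Psi_meas)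
  have Wi: "integrable W (\<lambda>w. Psi e w)" for e by (rule W.integrable_bnd[OF Wm Psi_bound])
  have fold: "(\<integral>w. f w \<partial>W) = (\<integral>x. (\<integral>y. f (merge I J (x, y)) \<partial>PJ) \<partial>P)" if "integrable W f" for f :: "(nat \<Rightarrow> 'z) \<Rightarrow> real"
    unfolding W_def P_def PJ_def IJ(4)[symmetric]
    by (rule PS.product_integral_fold[OF IJ(1-3)]) (use that IJ(4) W_def in simp)
  have F2: "(\<integral>y. Rad (\<lambda>i. y (n + i)) \<partial>PJ) = (\<integral>x. Rad x \<partial>P)"
  proof -
    have re: "distr PJ P (\<lambda>\<omega>. \<lambda>i\<in>I. \<omega> (n + i)) = P"
      unfolding PJ_def P_def using distr_PiM_reindex[of J "\<lambda>_. D" "\<lambda>i. n + i" I] D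
      unfolding I_def J_def by (auto simp: inj_on_def)
    have rm: "(\<lambda>\<omega>. \<lambda>i\<in>I. \<omega> (n + i)) \<in> measurable PJ P"
      unfolding PJ_def P_def by (rule measurable_restrict) (auto simp: I_def J_def)
    have Radm: "Rad \<in> borel_measurable P" using Rad_meas[of "\<lambda>i. i" I] unfolding P_def I_def by simp
    have "(\<integral>x. Rad x \<partial>P) = (\<integral>x. Rad x \<partial>distr PJ P (\<lambda>\<omega>. \<lambda>i\<in>I. \<omega> (n + i)))" unfolding re ..
    also have "\<dots> = (\<integral>y. Rad (\<lambda>i\<in>I. y (n + i)) \<partial>PJ)" by (rule integral_distr[OF rm Radm])
    also have "\<dots> = (\<integral>y. Rad (\<lambda>i. y (n + i)) \<partial>PJ)"
      by (rule Bochner_Integration.integral_cong[OF refl], rule Rad_cong) (auto simp: I_def)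
    finally show ?thesis ..
  qed
  have R1: "(\<integral>w. Rad (\<lambda>i. w i) \<partial>W) = (\<integral>x. Rad x \<partial>P)"
  proof -
    have int: "integrable W (\<lambda>w. Rad (\<lambda>i. w i))"
      by (rule W.integrable_bnd[OF _ Rad_bound]) (use Rad_meas[of "\<lambda>i. i" K] W_def K_def in simp)
    have "(\<integral>w. Rad (\<lambda>i. w i) \<partial>W) = (\<integral>x. (\<integral>y. Rad (\<lambda>i. merge I J (x, y) i) \<partial>PJ) \<partial>P)" by (rule fold[OF int])
    also have "\<dots> = (\<integral>x. (\<integral>y. Rad x \<partial>PJ) \<partial>P)"
      by (intro Bochner_Integration.integral_cong refl Rad_cong) (use IJ(1) in \<open>auto simp: I_def\<close>)
    also have "\<dots> = (\<integral>x. Rad x \<partial>P)" by (simp add: PJ.prob_space)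
    finally show ?thesis .
  qed
  have R2: "(\<integral>w. Rad (\<lambda>i. w (n + i)) \<partial>W) = (\<integral>x. Rad x \<partial>P)"
  proof -
    have int: "integrable W (\<lambda>w. Rad (\<lambda>i. w (n + i)))"
      by (rule W.integrable_bnd[OF _ Rad_bound]) (use Rad_meas[of "\<lambda>i. n + i" K] W_def K_def in simp)
    have "(\<integral>w. Rad (\<lambda>i. w (n + i)) \<partial>W) = (\<integral>x. (\<integral>y. Rad (\<lambda>i. merge I J (x, y) (n + i)) \<partial>PJ) \<partial>P)" by (rule fold[OF int])
    also have "\<dots> = (\<integral>x. (\<integral>y. Rad (\<lambda>i. y (n + i)) \<partial>PJ) \<partial>P)"
      by (intro Bochner_Integration.integral_cong refl Rad_cong) (use IJ(1) in \<open>auto simp: I_def J_def\<close>)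
    also have "\<dots> = (\<integral>x. Rad x \<partial>P)" unfolding F2 by (simp add: P.prob_space)
    finally show ?thesis .
  qed
  have S1: "(\<integral>w. Psi e w \<partial>W) = (\<integral>w. Psi (\<lambda>_. 1) w \<partial>W)" if e: "valid n e" for e
  proof -
    define \<pi> where "\<pi> j = (if j < n then (if e j = -1 then j + n else j) else (if e (j - n) = -1 then j - n else j))" for j
    have inj: "inj_on \<pi> K"
      unfolding inj_on_def K_def \<pi>_def by (auto split: if_splits)
    have pi: "\<pi> \<in> K \<rightarrow> K" unfolding K_def \<pi>_def by auto
    have re: "distr W W (\<lambda>\<omega>. \<lambda>j\<in>K. \<omega> (\<pi> j)) = W"
      unfolding W_def using distr_PiM_reindex[of K "\<lambda>_. D" \<pi> K] D inj pi by auto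
    have rm: "(\<lambda>\<omega>. \<lambda>j\<in>K. \<omega> (\<pi> j)) \<in> measurable W W"
      unfolding W_def by (rule measurable_restrict, rule measurable_component_singleton) (use pi in auto)
    have eq: "Psi (\<lambda>_. 1) (\<lambda>j\<in>K. \<omega> (\<pi> j)) = Psi e \<omega>" for \<omega>
      unfolding Psi_def
    proof (intro arg_cong[where f = Sup] image_cong refl sum.cong)
      fix \<theta> i assume i: "i \<in> {..<n}"
      have ei: "e i = 1 \<or> e i = -1" using e i unfolding valid_def by auto
      have k: "n + i \<in> K" "i \<in> K" using i unfolding K_def by auto
      have p1: "\<pi> (n + i) = (if e i = -1 then i else n + i)" unfolding \<pi>_def by auto
      have p2: "\<pi> i = (if e i = -1 then i + n else i)" unfolding \<pi>_def using i by auto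
      show "1 / real n * (lf \<theta> ((\<lambda>j\<in>K. \<omega> (\<pi> j)) (n + i)) - lf \<theta> ((\<lambda>j\<in>K. \<omega> (\<pi> j)) i))
          = e i / real n * (lf \<theta> (\<omega> (n + i)) - lf \<theta> (\<omega> i))"
        using ei k p1 p2 by (auto simp: add.commute field_simps)
    qed
    have "(\<integral>w. Psi (\<lambda>_. 1) w \<partial>W) = (\<integral>w. Psi (\<lambda>_. 1) w \<partial>distr W W (\<lambda>\<omega>. \<lambda>j\<in>K. \<omega> (\<pi> j)))" unfolding re ..
    also have "\<dots> = (\<integral>w. Psi (\<lambda>_. 1) (\<lambda>j\<in>K. w (\<pi> j)) \<partial>W)" by (rule integral_distr[OF rm Wm])
    also have "\<dots> = (\<integral>w. Psi e w \<partial>W)" unfolding eq ..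
    finally show ?thesis ..
  qed
  have S2: "(\<integral>w. Psi (\<lambda>_. 1) w \<partial>W) = (\<integral>w. ravg n (\<lambda>e. Psi e w) \<partial>W)"
  proof -
    have "(\<integral>w. Psi (\<lambda>_. 1) w \<partial>W) = ravg n (\<lambda>e. \<integral>w. Psi e w \<partial>W)"
      using ravg_cong[of n "\<lambda>e. \<integral>w. Psi e w \<partial>W" "\<lambda>_. \<integral>w. Psi (\<lambda>_. 1) w \<partial>W"] S1 by simp
    also have "\<dots> = (\<integral>w. ravg n (\<lambda>e. Psi e w) \<partial>W)"
      using ravg_integral[of W "\<lambda>e w. Psi e w" n] Wi by simp
    finally show ?thesis .
  qed
  have S3: "ravg n (\<lambda>e. Psi e w) \<le> (1 / real n) * (Rad (\<lambda>i. w (n + i)) + Rad (\<lambda>i. w i))" for w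
  proof -
    define SA where "SA e = Sup ((\<lambda>\<theta>. \<Sum>i<n. e i * lf \<theta> (w (n + i))) ` C)" for e
    define SB where "SB e = Sup ((\<lambda>\<theta>. \<Sum>i<n. e i * lf \<theta> (w i)) ` C)" for e
    have "ravg n (\<lambda>e. Psi e w) \<le> ravg n (\<lambda>e. (1 / real n) * SA e + (1 / real n) * SB (\<lambda>i. - e i))"
    proof (rule ravg_mono)
      fix e assume e: "valid n e"
      have bA: "bdd_above ((\<lambda>\<theta>. \<Sum>i<n. e i * lf \<theta> (w (n + i))) ` C)"
        by (rule bdd_sumC) (rule labs)
      have bB: "bdd_above ((\<lambda>\<theta>. \<Sum>i<n. - e i * lf \<theta> (w i)) ` C)"
        by (rule bdd_sumC) (rule labs)
      show "Psi e w \<le> (1 / real n) * SA e + (1 / real n) * SB (\<lambda>i. - e i)"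
        unfolding Psi_def
      proof (rule cSUP_least[OF C(2)])
        fix \<theta> assume t: "\<theta> \<in> C"
        have "(\<Sum>i<n. e i / real n * (lf \<theta> (w (n + i)) - lf \<theta> (w i)))
            = (1 / real n) * (\<Sum>i<n. e i * lf \<theta> (w (n + i))) + (1 / real n) * (\<Sum>i<n. - e i * lf \<theta> (w i))"
          by (simp add: sum_distrib_left sum.distrib[symmetric] field_simps sum_subtractf[symmetric])
        also have "\<dots> \<le> (1 / real n) * SA e + (1 / real n) * SB (\<lambda>i. - e i)"
          unfolding SA_def SB_def
          by (intro add_mono mult_left_mono cSUP_upper[OF t] bA bB) auto
        finally show "(\<Sum>i<n. e i / real n * (lf \<theta> (w (n + i)) - lf \<theta> (w i))) \<le> (1 / real n) * SA e + (1 / real n) * SB (\<lambda>i. - e i)" .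
      qed
    qed
    also have "\<dots> = (1 / real n) * ravg n SA + (1 / real n) * ravg n (\<lambda>e. SB (\<lambda>i. - e i))"
      by (simp only: ravg_add ravg_cmult)
    also have "ravg n (\<lambda>e. SB (\<lambda>i. - e i)) = ravg n SB" by (rule ravg_neg)
    also have "ravg n SA = Rad (\<lambda>i. w (n + i))" unfolding SA_def Rad_def ..
    also have "ravg n SB = Rad (\<lambda>i. w i)" unfolding SB_def Rad_def ..
    finally show ?thesis by (simp add: add_divide_distrib add.commute)
  qed
  have S5: "(\<integral>x. Z x \<partial>P) \<le> (\<integral>w. Psi (\<lambda>_. 1) w \<partial>W)"
  proof -
    define Q where "Q x y = Psi (\<lambda>_. 1) (merge I J (x, y))" for x y
    have Qm: "(\<lambda>(x, y). Q x y) \<in> borel_measurable (P \<Otimes>\<^sub>M PJ)"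
    proof -
      have "merge I J \<in> measurable (P \<Otimes>\<^sub>M PJ) W"
        unfolding P_def PJ_def W_def IJ(4)[symmetric] by (rule measurable_merge)
      from measurable_comp[OF this Wm] show ?thesis unfolding Q_def by (simp add: comp_def case_prod_beta)
    qed
    have Qy: "(\<lambda>y. Q x y) \<in> borel_measurable PJ" if "x \<in> space P" for x
      using measurable_Pair2[OF Qm that] by simp
    have Qb: "\<bar>Q x y\<bar> \<le> (\<Sum>i<n. \<bar>1 / real n\<bar>)" for x y unfolding Q_def by (rule order_trans[OF Psi_bound]) simp
    have Zle: "Z x \<le> (\<integral>y. Q x y \<partial>PJ)" if x: "x \<in> space P" for x
      unfolding Z_def
    proof (rule cSUP_least[OF C(2)])
      fix \<theta> assume t: "\<theta> \<in> C"
      have mt: "(\<lambda>y. lf \<theta> (y (n + i))) \<in> borel_measurable PJ" if "i < n" for i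
        unfolding PJ_def by (rule comp_meas[OF t]) (use that in \<open>simp add: J_def\<close>)
      have it: "integrable PJ (\<lambda>y. 1 / real n * (lf \<theta> (y (n + i)) - lf \<theta> (x i)))" if "i < n" for i
      proof (rule PJ.integrable_bnd[where B = 1])
        show "(\<lambda>y. 1 / real n * (lf \<theta> (y (n + i)) - lf \<theta> (x i))) \<in> borel_measurable PJ" using mt[OF that] by simp
        fix y
        have a: "\<bar>lf \<theta> (y (n + i)) - lf \<theta> (x i)\<bar> \<le> 1" by (rule dabs)
        have rn: "real n \<ge> 1" using n by simp
        have "\<bar>1 / real n * (lf \<theta> (y (n + i)) - lf \<theta> (x i))\<bar> = \<bar>lf \<theta> (y (n + i)) - lf \<theta> (x i)\<bar> / real n"
          by (simp add: abs_mult)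
        also have "\<dots> \<le> 1" using a rn by (simp add: divide_le_eq)
        finally show "\<bar>1 / real n * (lf \<theta> (y (n + i)) - lf \<theta> (x i))\<bar> \<le> 1" .
      qed
      have "E \<theta> - 1 / real n * (\<Sum>i<n. lf \<theta> (x i)) = (\<Sum>i<n. 1 / real n * (E \<theta> - lf \<theta> (x i)))"
      proof -
        have "(\<Sum>i<n. 1 / real n * (E \<theta> - lf \<theta> (x i))) = 1 / real n * (\<Sum>i<n. E \<theta> - lf \<theta> (x i))"
          by (rule sum_distrib_left[symmetric])
        also have "(\<Sum>i<n. E \<theta> - lf \<theta> (x i)) = real n * E \<theta> - (\<Sum>i<n. lf \<theta> (x i))"
          by (simp add: sum_subtractf)
        also have "1 / real n * (real n * E \<theta> - (\<Sum>i<n. lf \<theta> (x i))) = E \<theta> - 1 / real n * (\<Sum>i<n. lf \<theta> (x i))"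
          using n by (simp add: right_diff_distrib)
        finally show ?thesis ..
      qed
      also have "\<dots> = (\<Sum>i<n. (\<integral>y. 1 / real n * (lf \<theta> (y (n + i)) - lf \<theta> (x i)) \<partial>PJ))"
      proof (rule sum.cong[OF refl])
        fix i assume i: "i \<in> {..<n}"
        have ii: "integrable PJ (\<lambda>y. lf \<theta> (y (n + i)))"
          by (rule PJ.integrable_bnd[OF mt]) (use i labs in auto)
        have "(\<integral>y. lf \<theta> (y (n + i)) \<partial>PJ) = E \<theta>" unfolding PJ_def by (rule comp_int[OF t]) (use i in \<open>simp add: J_def\<close>)
        then show "1 / real n * (E \<theta> - lf \<theta> (x i)) = (\<integral>y. 1 / real n * (lf \<theta> (y (n + i)) - lf \<theta> (x i)) \<partial>PJ)"
          using ii by (simp add: PJ.prob_space)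
      qed
      also have "\<dots> = (\<integral>y. (\<Sum>i<n. 1 / real n * (lf \<theta> (y (n + i)) - lf \<theta> (x i))) \<partial>PJ)"
        using Bochner_Integration.integral_sum[where I = "{..<n}" and M = PJ and f = "\<lambda>i y. 1 / real n * (lf \<theta> (y (n + i)) - lf \<theta> (x i))"] it by simp
      also have "\<dots> \<le> (\<integral>y. Q x y \<partial>PJ)"
      proof (rule integral_mono)
        show "integrable PJ (\<lambda>y. \<Sum>i<n. 1 / real n * (lf \<theta> (y (n + i)) - lf \<theta> (x i)))" using it by auto
        show "integrable PJ (Q x)" by (rule PJ.integrable_bnd[OF Qy[OF x] Qb])
        fix y assume "y \<in> space PJ"
        have "(\<Sum>i<n. 1 / real n * (lf \<theta> (y (n + i)) - lf \<theta> (x i)))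
            = (\<Sum>i<n. 1 / real n * (lf \<theta> (merge I J (x, y) (n + i)) - lf \<theta> (merge I J (x, y) i)))"
          using IJ(1) by (intro sum.cong refl) (auto simp: I_def J_def)
        also have "\<dots> \<le> Q x y" unfolding Q_def Psi_def
        proof (rule cSUP_upper[OF t])
          show "bdd_above ((\<lambda>\<theta>. \<Sum>i<n. 1 / real n * (lf \<theta> (merge I J (x, y) (n + i)) - lf \<theta> (merge I J (x, y) i))) ` C)"
            by (rule bdd_sumC) (rule dabs)
        qed
        finally show "(\<Sum>i<n. 1 / real n * (lf \<theta> (y (n + i)) - lf \<theta> (x i))) \<le> Q x y" .
      qed
      finally show "E \<theta> - 1 / real n * (\<Sum>i<n. lf \<theta> (x i)) \<le> (\<integral>y. Q x y \<partial>PJ)" .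
    qed
    have Zm: "Z \<in> borel_measurable P" using Z_meas unfolding P_def I_def .
    have intQ: "integrable P (\<lambda>x. \<integral>y. Q x y \<partial>PJ)"
    proof (rule P.integrable_bnd[where B = "\<Sum>i<n. \<bar>1 / real n\<bar>"])
      show "(\<lambda>x. \<integral>y. Q x y \<partial>PJ) \<in> borel_measurable P"
        using PJ.borel_measurable_lebesgue_integral[of Q P] Qm by simp
      fix x assume "x \<in> space P"
      then show "\<bar>\<integral>y. Q x y \<partial>PJ\<bar> \<le> (\<Sum>i<n. \<bar>1 / real n\<bar>)" by (intro PJ.integral_abs_le_const Qy Qb)
    qed
    have "(\<integral>x. Z x \<partial>P) \<le> (\<integral>x. (\<integral>y. Q x y \<partial>PJ) \<partial>P)"
      by (rule integral_mono[OF P.integrable_bnd[OF Zm Z_bounds] intQ Zle])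
    also have "\<dots> = (\<integral>w. Psi (\<lambda>_. 1) w \<partial>W)" unfolding Q_def by (rule fold[OF Wi, symmetric])
    finally show ?thesis .
  qed
  have Rint: "integrable W (\<lambda>w. 1 / real n * (Rad (\<lambda>i. w (n + i)) + Rad (\<lambda>i. w i)))"
  proof -
    have a: "integrable W (\<lambda>w. Rad (\<lambda>i. w (n + i)))"
      by (rule W.integrable_bnd[OF _ Rad_bound]) (use Rad_meas[of "\<lambda>i. n + i" K] W_def K_def in simp)
    have b: "integrable W (\<lambda>w. Rad (\<lambda>i. w i))"
      by (rule W.integrable_bnd[OF _ Rad_bound]) (use Rad_meas[of "\<lambda>i. i" K] W_def K_def in simp)
    show ?thesis using a b by simp
  qed
  have ravgint: "integrable W (\<lambda>w. ravg n (\<lambda>e. Psi e w))" using ravg_integral[of W "\<lambda>e w. Psi e w" n] Wi by simp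
  have "(\<integral>x. Z x \<partial>P) \<le> (\<integral>w. ravg n (\<lambda>e. Psi e w) \<partial>W)" using S5 S2 by simp
  also have "\<dots> \<le> (\<integral>w. 1 / real n * (Rad (\<lambda>i. w (n + i)) + Rad (\<lambda>i. w i)) \<partial>W)"
    by (rule integral_mono[OF ravgint Rint S3])
  also have "\<dots> = 1 / real n * ((\<integral>w. Rad (\<lambda>i. w (n + i)) \<partial>W) + (\<integral>w. Rad (\<lambda>i. w i) \<partial>W))"
  proof -
    have a: "integrable W (\<lambda>w. Rad (\<lambda>i. w (n + i)))"
      by (rule W.integrable_bnd[OF _ Rad_bound]) (use Rad_meas[of "\<lambda>i. n + i" K] W_def K_def in simp)
    have b: "integrable W (\<lambda>w. Rad (\<lambda>i. w i))"
      by (rule W.integrable_bnd[OF _ Rad_bound]) (use Rad_meas[of "\<lambda>i. i" K] W_def K_def in simp)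
    show ?thesis using a b by simp
  qed
  also have "\<dots> = (2 / real n) * (\<integral>x. Rad x \<partial>P)" unfolding R1 R2 by simp
  finally show ?thesis unfolding P_def I_def .
qed

end


lemma hidden_cont:
  fixes Ls :: "('p::topological_space \<Rightarrow> layer) list"
  shows "\<forall>ds X. (\<forall>L\<in>set Ls. \<forall>i j. continuous_on UNIV (\<lambda>p. L p i j)) \<longrightarrow> (\<forall>j. continuous_on UNIV (\<lambda>p. X p j)) \<longrightarrow>
     (\<forall>j. continuous_on UNIV (\<lambda>p. hidden ds (map (\<lambda>L. L p) Ls) (X p) j))"
proof (induction Ls)
  case Nil
  show ?case by (intro allI impI) (case_tac ds; simp)
next
  case (Cons L Ls)
  show ?case
  proof (intro allI impI)
    fix ds :: "nat list" and X :: "'p \<Rightarrow> nat \<Rightarrow> real" and j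
    assume L: "\<forall>L'\<in>set (L # Ls). \<forall>i j. continuous_on UNIV (\<lambda>p. L' p i j)"
      and X: "\<forall>j. continuous_on UNIV (\<lambda>p. X p j)"
    show "continuous_on UNIV (\<lambda>p. hidden ds (map (\<lambda>L. L p) (L # Ls)) (X p) j)"
    proof (cases ds)
      case Nil then show ?thesis using X by simp
    next
      case (Cons a ds')
      define X' where "X' p = relu (affine_apply (L p) a (X p))" for p
      have X': "\<forall>j. continuous_on UNIV (\<lambda>p. X' p j)"
      proof
        fix j
        have "continuous_on UNIV (\<lambda>p. L p i j)" for i using L by simp
        then show "continuous_on UNIV (\<lambda>p. X' p j)"
          unfolding X'_def relu_def affine_apply_def using X by (intro continuous_intros) auto
      qed
      have "continuous_on UNIV (\<lambda>p. hidden ds' (map (\<lambda>L. L p) Ls) (X' p) j)"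
        using Cons.IH L X' by auto
      then show ?thesis unfolding Cons X'_def by simp
    qed
  qed
qed

lemma cont_coord3: "continuous_on UNIV (\<lambda>\<theta>::nat \<Rightarrow> nat \<Rightarrow> nat \<Rightarrow> real. \<theta> l i j)"
proof -
  have "continuous_on UNIV (\<lambda>\<theta>::nat \<Rightarrow> nat \<Rightarrow> nat \<Rightarrow> real. \<theta> l)" by (rule continuous_on_product_coordinates)
  then have "continuous_on UNIV (\<lambda>\<theta>::nat \<Rightarrow> nat \<Rightarrow> nat \<Rightarrow> real. \<theta> l i)" by (rule continuous_on_product_then_coordinatewise)
  then show ?thesis by (rule continuous_on_product_then_coordinatewise)
qed

definition netf :: "nat list \<Rightarrow> nat \<Rightarrow> (nat \<Rightarrow> layer) \<Rightarrow> (nat \<Rightarrow> real) \<Rightarrow> (nat \<Rightarrow> real)" where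
  "netf ds k \<theta> x = affine_apply (\<theta> k) (ds ! k) (hidden ds (map \<theta> [0..<k]) x)"

lemma netf_cont_theta: "continuous_on UNIV (\<lambda>\<theta>. netf ds k \<theta> x 0)"
proof -
  have h: "\<forall>j. continuous_on UNIV (\<lambda>\<theta>. hidden ds (map (\<lambda>L. L \<theta>) (map (\<lambda>l \<theta>. \<theta> l) [0..<k])) ((\<lambda>_. x) \<theta>) j)"
    using hidden_cont[of "map (\<lambda>l (\<theta>::nat \<Rightarrow> layer). \<theta> l) [0..<k]"] cont_coord3 by auto
  have "continuous_on UNIV (\<lambda>\<theta>. hidden ds (map \<theta> [0..<k]) x j)" for j
    using h[rule_format, of j] by (simp add: map_map comp_def)
  then show ?thesis unfolding netf_def affine_apply_def using cont_coord3
    by (intro continuous_intros) auto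
qed

lemma netf_cont_x: "continuous_on UNIV (\<lambda>x. netf ds k \<theta> x 0)"
proof -
  have h: "\<forall>j. continuous_on UNIV (\<lambda>x. hidden ds (map (\<lambda>L. L x) (map (\<lambda>l (x::nat\<Rightarrow>real). \<theta> l) [0..<k])) x j)"
    using hidden_cont[of "map (\<lambda>l (x::nat\<Rightarrow>real). \<theta> l) [0..<k]"] by (auto intro: continuous_on_product_coordinates)
  have "continuous_on UNIV (\<lambda>x. hidden ds (map \<theta> [0..<k]) x j)" for j
    using h[rule_format, of j] by (simp add: map_map comp_def)
  then show ?thesis unfolding netf_def affine_apply_def
    by (intro continuous_intros) auto
qed

lemma relu_nets_netf:
  assumes "length ds = k + 2"
  shows "relu_nets k ds 1 q c co = netf ds k ` {\<theta>. (\<forall>i<k. pq_norm 1 q (ds ! i) (ds ! Suc i) (\<theta> i) = c) \<and>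
           pq_norm 1 q (ds ! k) (ds ! Suc k) (\<theta> k) \<le> co}"
proof (intro equalityI subsetI)
  fix F assume "F \<in> relu_nets k ds 1 q c co"
  then obtain Vs where Vs: "length Vs = k + 1"
     "\<forall>i<k. pq_norm 1 q (ds ! i) (ds ! Suc i) (Vs ! i) = c"
     "pq_norm 1 q (ds ! k) (ds ! Suc k) (Vs ! k) \<le> co"
     "F = (\<lambda>x. affine_apply (Vs ! k) (ds ! k) (hidden ds (take k Vs) x))"
    unfolding relu_nets_def by auto
  define \<theta> where "\<theta> i = Vs ! i" for i
  have t: "take k Vs = map \<theta> [0..<k]"
    unfolding \<theta>_def using Vs(1) by (intro nth_equalityI) auto
  have "F = netf ds k \<theta>" unfolding netf_def Vs(4) t \<theta>_def by simp
  moreover have "(\<forall>i<k. pq_norm 1 q (ds ! i) (ds ! Suc i) (\<theta> i) = c) \<and> pq_norm 1 q (ds ! k) (ds ! Suc k) (\<theta> k) \<le> co"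
    using Vs unfolding \<theta>_def by auto
  ultimately show "F \<in> netf ds k ` {\<theta>. (\<forall>i<k. pq_norm 1 q (ds ! i) (ds ! Suc i) (\<theta> i) = c) \<and>
           pq_norm 1 q (ds ! k) (ds ! Suc k) (\<theta> k) \<le> co}" by blast
next
  fix F assume "F \<in> netf ds k ` {\<theta>. (\<forall>i<k. pq_norm 1 q (ds ! i) (ds ! Suc i) (\<theta> i) = c) \<and>
           pq_norm 1 q (ds ! k) (ds ! Suc k) (\<theta> k) \<le> co}"
  then obtain \<theta> where th: "\<forall>i<k. pq_norm 1 q (ds ! i) (ds ! Suc i) (\<theta> i) = c"
      "pq_norm 1 q (ds ! k) (ds ! Suc k) (\<theta> k) \<le> co" and F: "F = netf ds k \<theta>" by auto
  define Vs where "Vs = map \<theta> [0..<Suc k]"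
  have t: "take k Vs = map \<theta> [0..<k]" unfolding Vs_def by (simp add: take_map)
  show "F \<in> relu_nets k ds 1 q c co"
    unfolding relu_nets_def
    by (rule CollectI, rule exI[of _ Vs]) (use assms th t in \<open>auto simp: Vs_def F netf_def nth_append\<close>)
qed


theorem mainTheorem11:
  fixes m1 k n :: nat and dh :: "nat list" and Y :: "real set"
    and D :: "((nat \<Rightarrow> real) \<times> real) measure"
    and d :: "real \<Rightarrow> real \<Rightarrow> real"
    and q :: ereal and c co \<delta> a0 :: real
  assumes m1: "m1 \<ge> 1"
    and D_prob: "prob_space D"
    and D_sets: "sets D = sets (borel \<Otimes>\<^sub>M borel)"
    and D_supp: "AE z in D. z \<in> cube m1 \<times> Y"
    and d_meas: "(\<lambda>(y, u). d y u) \<in> borel_measurable (borel \<Otimes>\<^sub>M borel)"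
    and d_range: "\<And>y u. y \<in> Y \<Longrightarrow> 0 \<le> d y u \<and> d y u \<le> 1"
    and d_lip: "\<And>y u u'. y \<in> Y \<Longrightarrow> \<bar>d y u - d y u'\<bar> \<le> \<bar>u - u'\<bar>"
    and q: "1 \<le> q"
    and c: "c > 0" and co: "co > 0"
    and dh: "length dh = k" "\<forall>w\<in>set dh. w \<ge> 1"
    and \<delta>: "0 < \<delta>" "\<delta> < 1"
    and a0: "a0 \<ge> 1" "c ^ k \<le> a0"
    and n: "n \<ge> 1"
  shows "\<exists>A \<in> sets (PiM {..<n} (\<lambda>_. D)).
           measure (PiM {..<n} (\<lambda>_. D)) A \<ge> 1 - \<delta> \<and>
           (\<forall>S\<in>A. \<forall>F\<in>relu_nets k (m1 # dh @ [1]) 1 q c co.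
              (\<integral>z. d (snd z) (F (fst z) 0) \<partial>D)
                \<le> (1 / real n) * (\<Sum>i<n. d (snd (S i)) (F (fst (S i)) 0))
                  + sqrt (ln (1 / \<delta>) / (2 * real n))
                  + 4 * co * a0 / sqrt (real n) * sqrt (real k + 2 + ln (real m1 + 1)))"
proof -
  define ds where "ds = m1 # dh @ [1]"
  have lds: "length ds = k + 2" using dh by (simp add: ds_def)
  define \<Theta> where "\<Theta> = {\<theta>. (\<forall>i<k. pq_norm 1 q (ds ! i) (ds ! Suc i) (\<theta> i) = c) \<and>
           pq_norm 1 q (ds ! k) (ds ! Suc k) (\<theta> k) \<le> co}"
  have RN: "relu_nets k (m1 # dh @ [1]) 1 q c co = netf ds k ` \<Theta>"
    using relu_nets_netf[OF lds] unfolding ds_def \<Theta>_def by simp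
  define P where "P = PiM {..<n} (\<lambda>_. D)"
  interpret D: prob_space D by (rule D_prob)
  interpret P: prob_space P unfolding P_def by (rule prob_space_PiM) (rule D_prob)
  show ?thesis
  proof (cases "\<Theta> = {}")
    case True
    have E: "relu_nets k (m1 # dh @ [1]) 1 q c co = {}" using RN True by simp
    show ?thesis
      by (rule bexI[of _ "space P"]) (use \<delta> in \<open>simp_all only: E P_def[symmetric] P.prob_space, auto\<close>)
  next
    case False
    obtain C0 where C0: "countable C0" "C0 \<subseteq> \<Theta>" "\<Theta> \<subseteq> closure C0" using separable[of \<Theta>] by blast
    have C0ne: "C0 \<noteq> {}" using C0(3) False by auto
    define l where "l \<theta> z = lossc d (netf ds k \<theta>) z" for \<theta> z
    have spaceD: "space D = UNIV"
      using sets_eq_imp_space_eq[OF D_sets] by (simp add: space_pair_measure)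
    have fm: "(\<lambda>z. d (snd z) (netf ds k \<theta> (fst z) 0)) \<in> borel_measurable D" for \<theta>
    proof -
      have g: "(\<lambda>x. netf ds k \<theta> x 0) \<in> borel_measurable borel"
        by (rule borel_measurable_continuous_onI[OF netf_cont_x])
      have "(\<lambda>z. (snd z, netf ds k \<theta> (fst z) 0)) \<in> measurable (borel \<Otimes>\<^sub>M borel) (borel \<Otimes>\<^sub>M (borel :: real measure))"
        using g by measurable
      from measurable_comp[OF this d_meas]
      have "(\<lambda>z. d (snd z) (netf ds k \<theta> (fst z) 0)) \<in> borel_measurable (borel \<Otimes>\<^sub>M borel)"
        by (simp add: comp_def)
      then show ?thesis using measurable_cong_sets[OF D_sets refl] by blast
    qed
    have lm: "l \<theta> \<in> borel_measurable D" for \<theta>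
      unfolding l_def lossc_def using fm[of \<theta>] by measurable
    interpret S: symm_setup D C0 l n
      by unfold_locales (use D_prob C0 C0ne lm n lossc_range in \<open>auto simp: l_def\<close>)
    have clip: "max 0 (min 1 (d y u)) = d y u" if "y \<in> Y" for y u
    proof -
      from d_range[OF that] have "0 \<le> d y u" "d y u \<le> 1" by auto
      then show ?thesis by simp
    qed
    define Kc where "Kc = real k + 2 + ln (real m1 + 1)"
    define EZ where "EZ = (\<integral>x. S.Z x \<partial>P)"
    define s where "s = sqrt (ln (1 / \<delta>) / (2 * real n))"
    have lnd: "ln (1 / \<delta>) > 0" using \<delta> by simp
    have s0: "s > 0" unfolding s_def using lnd n by simp
    have Zm: "S.Z \<in> borel_measurable P" using S.Z_meas unfolding P_def .
    have supp: "AE x in P. \<forall>i\<in>{..<n}. x i \<in> cube m1 \<times> Y"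
      unfolding P_def
      by (rule eventually_ball_finite) (auto intro!: AE_PiM_component D_prob D_supp)
    have radb: "AE x in P. S.Rad x \<le> 2 * (co * a0) * sqrt (real n) * sqrt Kc"
      using supp
    proof eventually_elim
      case (elim x)
      have "S.Rad x = ravg n (\<lambda>e. Sup ((\<lambda>F. \<Sum>i<n. e i * lossc d F (x i)) ` (netf ds k ` C0)))"
        unfolding S.Rad_def l_def image_image ..
      also have "\<dots> \<le> 2 * (co * a0) * sqrt (real n) * sqrt Kc"
        unfolding Kc_def
      proof (rule rad_sample[OF m1 c co a0 q dh(1) n _ d_lip])
        show "\<forall>i<n. x i \<in> cube m1 \<times> Y" using elim by auto
        show "netf ds k ` C0 \<subseteq> relu_nets k (m1 # dh @ [1]) 1 q c co" unfolding RN using C0 by auto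
        show "netf ds k ` C0 \<noteq> {}" using C0ne by auto
      qed auto
      finally show ?case .
    qed
    have Radm: "S.Rad \<in> borel_measurable P" using S.Rad_meas[of "\<lambda>i. i" "{..<n}"] unfolding P_def by simp
    have EZb: "EZ \<le> 4 * co * a0 / sqrt (real n) * sqrt Kc"
    proof -
      have "EZ \<le> (2 / real n) * (\<integral>x. S.Rad x \<partial>P)" unfolding EZ_def P_def by (rule S.symmetrization)
      also have "(\<integral>x. S.Rad x \<partial>P) \<le> 2 * (co * a0) * sqrt (real n) * sqrt Kc"
      proof -
        have "(\<integral>x. S.Rad x \<partial>P) \<le> (\<integral>x. 2 * (co * a0) * sqrt (real n) * sqrt Kc \<partial>P)"
          by (rule integral_mono_AE[OF P.integrable_bnd[OF Radm S.Rad_bound] _ radb]) simp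
        then show ?thesis by (simp add: P.prob_space)
      qed
      then have "(2 / real n) * (\<integral>x. S.Rad x \<partial>P) \<le> (2 / real n) * (2 * (co * a0) * sqrt (real n) * sqrt Kc)"
        by (intro mult_left_mono) auto
      also have "\<dots> = 4 * co * a0 / sqrt (real n) * sqrt Kc"
      proof -
        have "real n = sqrt (real n) * sqrt (real n)" by simp
        moreover have "sqrt (real n) > 0" using n by simp
        ultimately show ?thesis by (simp add: field_simps)
      qed
      finally show ?thesis .
    qed
    have bdZ: "bdd_above ((\<lambda>\<theta>. S.E \<theta> - 1 / real n * (\<Sum>j<n. l \<theta> (v j))) ` C0)" for v
    proof (rule bdd_aboveI[of _ 1])
      fix y assume "y \<in> (\<lambda>\<theta>. S.E \<theta> - 1 / real n * (\<Sum>j<n. l \<theta> (v j))) ` C0"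
      then obtain \<theta> where "y = S.E \<theta> - 1 / real n * (\<Sum>j<n. l \<theta> (v j))" by auto
      then show "y \<le> 1" using S.E_bounds[of \<theta>] S.avg_bounds[of \<theta> v] by linarith
    qed
    have Zdiff: "\<forall>x\<in>space (PiM {..<n} (\<lambda>_. D)). \<forall>i<n. \<forall>y\<in>space D. \<bar>S.Z x - S.Z (x(i:=y))\<bar> \<le> 1 / real n"
    proof (intro ballI allI impI)
      fix x i y assume i: "i < n"
      have bd: "bdd_above ((\<lambda>\<theta>. S.E \<theta> - 1 / real n * (\<Sum>j<n. l \<theta> (v j))) ` C0)" for v
        by (rule bdZ)
      show "\<bar>S.Z x - S.Z (x(i:=y))\<bar> \<le> 1 / real n"
        unfolding S.Z_def
      proof (rule sup_diff_le[OF C0ne _ bd bd])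
        fix \<theta>
        have "(\<Sum>j<n. l \<theta> (x j)) - (\<Sum>j<n. l \<theta> ((x(i:=y)) j)) = (\<Sum>j<n. (if j = i then l \<theta> (x i) - l \<theta> y else 0))"
          by (simp only: sum_subtractf[symmetric]) (intro sum.cong refl, auto)
        also have "\<dots> = l \<theta> (x i) - l \<theta> y" using i by simp
        finally have eq: "(\<Sum>j<n. l \<theta> (x j)) - (\<Sum>j<n. l \<theta> ((x(i:=y)) j)) = l \<theta> (x i) - l \<theta> y" .
        have "\<bar>(S.E \<theta> - 1 / real n * (\<Sum>j<n. l \<theta> (x j))) - (S.E \<theta> - 1 / real n * (\<Sum>j<n. l \<theta> ((x(i:=y)) j)))\<bar>
            = 1 / real n * \<bar>l \<theta> (x i) - l \<theta> y\<bar>"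
        proof -
          have e2: "(S.E \<theta> - 1 / real n * A1) - (S.E \<theta> - 1 / real n * A2) = - (1 / real n * (A1 - A2))" for A1 A2 :: real
            by (simp add: right_diff_distrib)
          show ?thesis by (simp only: e2 eq abs_minus_cancel) (simp add: abs_mult)
        qed
        also have "\<dots> \<le> 1 / real n * 1" by (intro mult_left_mono S.dabs) auto
        finally show "\<bar>(S.E \<theta> - 1 / real n * (\<Sum>j<n. l \<theta> (x j))) - (S.E \<theta> - 1 / real n * (\<Sum>j<n. l \<theta> ((x(i:=y)) j)))\<bar> \<le> 1 / real n"
          by simp
      qed
    qed
    have tail: "measure P {x \<in> space P. S.Z x - EZ \<ge> s} \<le> \<delta>"
    proof -
      have "measure P {x \<in> space P. S.Z x - EZ \<ge> s} \<le> exp (- 2 * s\<^sup>2 / (real n * (1 / real n)\<^sup>2))"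
        unfolding P_def EZ_def
        by (rule mcdiarmid_tail[OF D_prob S.Z_meas _ Zdiff s0 _ n]) (use S.Z_bounds n in auto)
      also have "- 2 * s\<^sup>2 / (real n * (1 / real n)\<^sup>2) = - ln (1 / \<delta>)"
        unfolding s_def using lnd n by (simp add: power2_eq_square field_simps)
      also have "exp (- ln (1 / \<delta>)) = \<delta>" using \<delta> by (simp add: ln_div)
      finally show ?thesis .
    qed
    from D_supp obtain N where N: "{z \<in> space D. \<not> z \<in> cube m1 \<times> Y} \<subseteq> N" "emeasure D N = 0" "N \<in> sets D"
      by (rule AE_E)
    define A where "A = {x \<in> space P. S.Z x < EZ + s \<and> (\<forall>i<n. x i \<notin> N)}"
    define A0 where "A0 = {x \<in> space P. S.Z x < EZ + s}"
    have A0s: "A0 \<in> sets P" unfolding A0_def using Zm by measurable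
    have Ns: "{x \<in> space P. x i \<notin> N} \<in> sets P" if "i < n" for i
    proof -
      have "{x \<in> space P. x i \<notin> N} = space P - ((\<lambda>x. x i) -` N \<inter> space P)" by auto
      moreover have "(\<lambda>x. x i) -` N \<inter> space P \<in> sets P"
        using measurable_sets[OF measurable_component_singleton[of i "{..<n}" "\<lambda>_. D"] N(3)] that
        unfolding P_def by simp
      ultimately show ?thesis by auto
    qed
    have As: "A \<in> sets P"
    proof -
      have "A = A0 \<inter> (\<Inter>i\<in>{..<n}. {x \<in> space P. x i \<notin> N})" unfolding A_def A0_def using n by auto
      also have "\<dots> \<in> sets P"
      proof (intro sets.Int A0s sets.finite_INT)
        have "0 \<in> {..<n}" using n by simp
        then show "{..<n} \<noteq> {}" by blast
      qed (use Ns in auto)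
      finally show ?thesis .
    qed
    have AEN: "AE x in P. \<forall>i\<in>{..<n}. x i \<notin> N"
    proof -
      have "AE z in D. z \<notin> N" using N(2,3) by (intro AE_not_in) (simp add: null_sets_def)
      then show ?thesis unfolding P_def
        by (intro eventually_ball_finite) (auto intro!: AE_PiM_component D_prob)
    qed
    have mA: "measure P A \<ge> 1 - \<delta>"
    proof -
      have "measure P A = measure P A0"
        by (rule measure_eq_AE[OF _ As A0s]) (use AEN in \<open>eventually_elim, auto simp: A_def A0_def\<close>)
      also have "A0 = space P - {x \<in> space P. S.Z x - EZ \<ge> s}" unfolding A0_def by auto
      also have "measure P \<dots> = 1 - measure P {x \<in> space P. S.Z x - EZ \<ge> s}"
        by (rule P.prob_compl) (use Zm in measurable)
      finally show ?thesis using tail by simp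
    qed
    have main: "(\<integral>z. d (snd z) (netf ds k \<theta> (fst z) 0) \<partial>D)
                \<le> (1 / real n) * (\<Sum>i<n. d (snd (S i)) (netf ds k \<theta> (fst (S i)) 0))
                  + s + 4 * co * a0 / sqrt (real n) * sqrt Kc"
      if SA: "S \<in> A" and th: "\<theta> \<in> \<Theta>" for S \<theta>
    proof -
      have Sc: "S i \<in> cube m1 \<times> Y" if "i < n" for i
        using SA that N(1) spaceD unfolding A_def by auto
      have Yd: "\<And>z. z \<in> cube m1 \<times> Y \<Longrightarrow> snd z \<in> Y" by auto
      have ineq: "(\<integral>z. d (snd z) (netf ds k \<theta>' (fst z) 0) \<partial>D)
                \<le> (1 / real n) * (\<Sum>i<n. d (snd (S i)) (netf ds k \<theta>' (fst (S i)) 0))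
                  + s + 4 * co * a0 / sqrt (real n) * sqrt Kc" if t: "\<theta>' \<in> C0" for \<theta>'
      proof -
        have E_eq: "S.E \<theta>' = (\<integral>z. d (snd z) (netf ds k \<theta>' (fst z) 0) \<partial>D)"
          unfolding S.E_def
        proof (rule integral_cong_AE[OF lm fm])
          show "AE z in D. l \<theta>' z = d (snd z) (netf ds k \<theta>' (fst z) 0)"
            using D_supp by eventually_elim (auto simp: l_def lossc_def clip)
        qed
        have l_eq: "l \<theta>' (S i) = d (snd (S i)) (netf ds k \<theta>' (fst (S i)) 0)" if "i < n" for i
          using Sc[OF that] unfolding l_def lossc_def by (auto simp: clip mem_Times_iff)
        have bd: "bdd_above ((\<lambda>\<theta>. S.E \<theta> - 1 / real n * (\<Sum>j<n. l \<theta> (S j))) ` C0)"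
          by (rule bdZ)
        have "S.E \<theta>' - 1 / real n * (\<Sum>j<n. l \<theta>' (S j)) \<le> S.Z S"
          unfolding S.Z_def by (rule cSUP_upper[OF t bd])
        also have "\<dots> < EZ + s" using SA unfolding A_def by auto
        also have "\<dots> \<le> 4 * co * a0 / sqrt (real n) * sqrt Kc + s" using EZb by simp
        finally have "S.E \<theta>' - 1 / real n * (\<Sum>j<n. l \<theta>' (S j)) \<le> 4 * co * a0 / sqrt (real n) * sqrt Kc + s" by simp
        moreover have "(\<Sum>j<n. l \<theta>' (S j)) = (\<Sum>j<n. d (snd (S j)) (netf ds k \<theta>' (fst (S j)) 0))"
          by (rule sum.cong) (auto simp: l_eq)
        ultimately show ?thesis unfolding E_eq by simp
      qed
      have "\<theta> \<in> closure C0" using th C0(3) by auto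
      then obtain \<theta>s where ths: "\<And>m. \<theta>s m \<in> C0" "\<theta>s \<longlonglongrightarrow> \<theta>" using closure_sequential by blast
      have conv: "(\<lambda>m. netf ds k (\<theta>s m) x 0) \<longlonglongrightarrow> netf ds k \<theta> x 0" for x
        by (rule continuous_on_tendsto_compose[OF netf_cont_theta ths(2)]) auto
      have dconv: "(\<lambda>m. d y (netf ds k (\<theta>s m) x 0)) \<longlonglongrightarrow> d y (netf ds k \<theta> x 0)" if y: "y \<in> Y" for x y
      proof (rule metric_tendsto_imp_tendsto[OF conv[of x]])
        show "\<forall>\<^sub>F m in sequentially. dist (d y (netf ds k (\<theta>s m) x 0)) (d y (netf ds k \<theta> x 0))
              \<le> dist (netf ds k (\<theta>s m) x 0) (netf ds k \<theta> x 0)"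
          using d_lip[OF y] by (simp add: dist_real_def)
      qed
      have L: "(\<lambda>m. \<integral>z. d (snd z) (netf ds k (\<theta>s m) (fst z) 0) \<partial>D) \<longlonglongrightarrow> (\<integral>z. d (snd z) (netf ds k \<theta> (fst z) 0) \<partial>D)"
      proof (rule integral_dominated_convergence[where w = "\<lambda>_. 1"])
        show "(\<lambda>z. d (snd z) (netf ds k \<theta> (fst z) 0)) \<in> borel_measurable D" by (rule fm)
        show "(\<lambda>z. d (snd z) (netf ds k (\<theta>s m) (fst z) 0)) \<in> borel_measurable D" for m by (rule fm)
        show "integrable D (\<lambda>_. 1::real)" by simp
        show "AE z in D. (\<lambda>m. d (snd z) (netf ds k (\<theta>s m) (fst z) 0)) \<longlonglongrightarrow> d (snd z) (netf ds k \<theta> (fst z) 0)"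
          using D_supp by eventually_elim (auto intro: dconv)
        show "AE z in D. norm (d (snd z) (netf ds k (\<theta>s m) (fst z) 0)) \<le> 1" for m
          using D_supp by eventually_elim (use d_range in \<open>auto simp: mem_Times_iff\<close>)
      qed
      have R: "(\<lambda>m. (1 / real n) * (\<Sum>i<n. d (snd (S i)) (netf ds k (\<theta>s m) (fst (S i)) 0))
                  + s + 4 * co * a0 / sqrt (real n) * sqrt Kc)
              \<longlonglongrightarrow> (1 / real n) * (\<Sum>i<n. d (snd (S i)) (netf ds k \<theta> (fst (S i)) 0))
                  + s + 4 * co * a0 / sqrt (real n) * sqrt Kc"
        using Sc by (intro tendsto_intros dconv) (auto simp: mem_Times_iff)
      show ?thesis
        by (rule LIMSEQ_le[OF L R]) (use ineq ths(1) in auto)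
    qed
    show ?thesis
    proof (rule bexI[of _ A])
      show "A \<in> sets (PiM {..<n} (\<lambda>_. D))" using As unfolding P_def .
      show "measure (PiM {..<n} (\<lambda>_. D)) A \<ge> 1 - \<delta> \<and>
           (\<forall>S\<in>A. \<forall>F\<in>relu_nets k (m1 # dh @ [1]) 1 q c co.
              (\<integral>z. d (snd z) (F (fst z) 0) \<partial>D)
                \<le> (1 / real n) * (\<Sum>i<n. d (snd (S i)) (F (fst (S i)) 0))
                  + sqrt (ln (1 / \<delta>) / (2 * real n))
                  + 4 * co * a0 / sqrt (real n) * sqrt (real k + 2 + ln (real m1 + 1)))"
        using mA main unfolding RN P_def[symmetric] s_def[symmetric] Kc_def[symmetric] by auto
    qed
  qed
qed


end
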